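(* Let $r\ge 0$ and let $\mathcal Y_r(\mathbf q,\dot{\mathbf q},\dots,\mathbf q^{(r)},\mathbf q^{(r+1)},t)$ be a smooth real-valued function. Let $\bar{\mathbf q}(\mathbf q,t)$ be a $C^\infty$ change of coordinates on $\mathbb R^\ell$ with $\det J_{\mathbf q}\bar{\mathbf q}\neq 0$, where $(J_{\mathbf q}\bar{\mathbf q})_{ij}=\partial\bar q_i/\partial q_j$. Let $\widetilde{\mathcal Y}_r(\bar{\mathbf q},\dot{\bar{\mathbf q}},\dots,\bar{\mathbf q}^{(r+1)},t)$ denote $\mathcal Y_r$ expressed in the new variables, i.e. $\mathcal Y_r$ evaluated at $\mathbf q(\bar{\mathbf q},t)$, $\dot{\mathbf q}(\bar{\mathbf q},\dot{\bar{\mathbf q}},t)$, …, $\mathbf q^{(r+1)}(\bar{\mathbf q},\dots,\bar{\mathbf q}^{(r+1)},t)$ (the inverse transformation and its total time derivatives). Then the operator $\mathcal O_r$ is covariant: $$\nabla_{\mathbf q^{(r)}}\mathcal Y_r-(r+1)\frac{d}{dt}\nabla_{\mathbf q^{(r+1)}}\mathcal Y_r=(J_{\mathbf q}\bar{\mathbf q})^T\Big(\nabla_{\bar{\mathbf q}^{(r)}}\widetilde{\mathcal Y}_r-(r+1)\frac{d}{dt}\nabla_{\bar{\mathbf q}^{(r+1)}}\widetilde{\mathcal Y}_r\Big),$$ where both sides are evaluated at corresponding points (equivalently, along any smooth curve $t\mapsto\mathbf q(t)$ and its image $\bar{\mathbf q}(t)=\bar{\mathbf q}(\mathbf q(t)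,t)$).
   Context: $\mathbf q=(q_1,\dots,q_\ell)\in\mathbb R^\ell$; $\mathbf q^{(h)}$ denotes the $h$-th time derivative $d^h\mathbf q/dt^h$ (with $\mathbf q^{(0)}=\mathbf q$), treated as independent variables of the functions considered. For a function $F(\mathbf q,\dots,\mathbf q^{(k)},t)$, $\frac{dF}{dt}=\partial_t F+\sum_{j=0}^{k}\nabla_{\mathbf q^{(j)}}F\cdot\mathbf q^{(j+1)}$ is the total time derivative, and $\nabla_{\mathbf q^{(j)}}F$ is the gradient with respect to the variables $\mathbf q^{(j)}$. For $r\ge0$ and a function $\mathcal Y_r$ depending on $\mathbf q,\dots,\mathbf q^{(r+1)},t$, the extended Lagrangian binomial is $\mathcal O_r[\mathcal Y_r]=\nabla_{\mathbf q^{(r)}}\mathcal Y_r-(r+1)\frac{d}{dt}\nabla_{\mathbf q^{(r+1)}}\mathcal Y_r$ (an $\mathbb R^\ell$-valued function); for $r=0$ it is the usual $\nabla_{\mathbf q}\mathcal L-\frac d{dt}\nabla_{\dot{\mathbf q}}\mathcal L$. *)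

theory Defs
  imports "HOL-Analysis.Analysis"
begin

coinductive smoothE :: "('a::euclidean_space \<Rightarrow> real) \<Rightarrow> bool" where
  "continuous_on UNIV f \<Longrightarrow>
   (\<forall>b\<in>Basis. \<exists>g. (\<forall>x. ((\<lambda>s. f (x + s *\<^sub>R b)) has_real_derivative g x) (at 0)) \<and> smoothE g) \<Longrightarrow>
   smoothE f"

text \<open>Jet variables: a point of jet space is a sequence J :: nat => real^n, where J k stands for
  the k-th derivative q^(k); together with the time t.  Smoothness: continuity (product topology; for functions
  depending on finitely many slots this is ordinary continuity) and smoothness of all partial
  derivatives with respect to each component of each slot and with respect to t.\<close>
coinductive smoothJ :: "((nat \<Rightarrow> real^'n) \<Rightarrow> real \<Rightarrow> real) \<Rightarrow> bool" where
  "continuous_on UNIV (\<lambda>p. F (fst p) (snd p)) \<Longrightarrow>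
   (\<forall>j i. \<exists>G. (\<forall>J t. ((\<lambda>s. F (J(j := J j + s *\<^sub>R axis i 1)) t) has_real_derivative G J t) (at 0))
               \<and> smoothJ G) \<Longrightarrow>
   (\<exists>G. (\<forall>J t. ((\<lambda>s. F J (t + s)) has_real_derivative G J t) (at 0)) \<and> smoothJ G) \<Longrightarrow>
   smoothJ F"

definition depends_upto :: "nat \<Rightarrow> ((nat \<Rightarrow> real^'n) \<Rightarrow> real \<Rightarrow> 'b) \<Rightarrow> bool" where
  "depends_upto k F \<longleftrightarrow> (\<forall>J J' t. (\<forall>j\<le>k. J j = J' j) \<longrightarrow> F J t = F J' t)"

definition gradJ :: "nat \<Rightarrow> ((nat \<Rightarrow> real^'n) \<Rightarrow> real \<Rightarrow> real) \<Rightarrow> (nat \<Rightarrow> real^'n) \<Rightarrow> real \<Rightarrow> real^'n" where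
  "gradJ j F J t = (\<chi> i. deriv (\<lambda>s. F (J(j := J j + s *\<^sub>R axis i 1)) t) 0)"

definition dtJ :: "((nat \<Rightarrow> real^'n) \<Rightarrow> real \<Rightarrow> real) \<Rightarrow> (nat \<Rightarrow> real^'n) \<Rightarrow> real \<Rightarrow> real" where
  "dtJ F J t = deriv (\<lambda>s. F J (t + s)) 0"

definition totJ :: "nat \<Rightarrow> ((nat \<Rightarrow> real^'n) \<Rightarrow> real \<Rightarrow> real) \<Rightarrow> (nat \<Rightarrow> real^'n) \<Rightarrow> real \<Rightarrow> real" where
  "totJ k F J t = dtJ F J t + (\<Sum>j\<le>k. gradJ j F J t \<bullet> J (Suc j))"

definition totJv :: "nat \<Rightarrow> ((nat \<Rightarrow> real^'n) \<Rightarrow> real \<Rightarrow> real^'m) \<Rightarrow> (nat \<Rightarrow> real^'n) \<Rightarrow> real \<Rightarrow> real^'m" where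
  "totJv k G J t = (\<chi> i. totJ k (\<lambda>J' t'. G J' t' $ i) J t)"

text \<open>Extended Lagrangian binomial O_r[Y] = grad_{q^(r)} Y - (r+1) d/dt grad_{q^(r+1)} Y,
  for Y depending on q, ..., q^(r+1), t (so grad_{q^(r+1)} Y depends on slots up to r+1).\<close>
definition Op :: "nat \<Rightarrow> ((nat \<Rightarrow> real^'n) \<Rightarrow> real \<Rightarrow> real) \<Rightarrow> (nat \<Rightarrow> real^'n) \<Rightarrow> real \<Rightarrow> real^'n" where
  "Op r Y J t = gradJ r Y J t - real (Suc r) *\<^sub>R totJv (Suc r) (gradJ (Suc r) Y) J t"

definition jac :: "(real^'n \<Rightarrow> real \<Rightarrow> real^'n) \<Rightarrow> real^'n \<Rightarrow> real \<Rightarrow> real^'n^'n" where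
  "jac \<Phi> q t = (\<chi> i j. deriv (\<lambda>s. \<Phi> (q + s *\<^sub>R axis j 1) t $ i) 0)"

text \<open>Induced map on jets: the k-th time derivative of \<Phi>(q,t) expressed as a function
  of q, ..., q^(k), t (iterated total derivatives).\<close>
fun jetmap :: "(real^'n \<Rightarrow> real \<Rightarrow> real^'n) \<Rightarrow> nat \<Rightarrow> (nat \<Rightarrow> real^'n) \<Rightarrow> real \<Rightarrow> real^'n" where
  "jetmap \<Phi> 0 = (\<lambda>J t. \<Phi> (J 0) t)"
| "jetmap \<Phi> (Suc k) = totJv k (jetmap \<Phi> k)"

text \<open>A jet function transported through a coordinate transformation whose inverse is \<Psi>:
  Ytilde(qbar-jet, t) = Y(q-jet(qbar-jet, t), t).\<close>
definition transport :: "(real^'n \<Rightarrow> real \<Rightarrow> real^'n) \<Rightarrow> ((nat \<Rightarrow> real^'n) \<Rightarrow> real \<Rightarrow> real)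
    \<Rightarrow> (nat \<Rightarrow> real^'n) \<Rightarrow> real \<Rightarrow> real" where
  "transport \<Psi> Y = (\<lambda>Jb t. Y (\<lambda>k. jetmap \<Psi> k Jb t) t)"

end

theory Submission
  imports Defs
begin


lemma tendsto_fun_coord:
  fixes f :: "'a \<Rightarrow> 'i \<Rightarrow> 'b::topological_space"
  assumes "\<And>i. ((\<lambda>x. f x i) \<longlongrightarrow> g i) F"
  shows "(f \<longlongrightarrow> g) F"
proof (rule topological_tendstoI)
  fix U assume "open U" "g \<in> U"
  then have "openin (product_topology (\<lambda>i. euclidean) UNIV) U" "g \<in> U"
    unfolding open_fun_def by auto
  from product_topology_open_contains_basis[OF this]
  obtain X where H: "g \<in> (\<Pi>\<^sub>E i\<in>UNIV. X i)" "\<And>i. open (X i)" "finite {i. X i \<noteq> UNIV}"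
     "(\<Pi>\<^sub>E i\<in>UNIV. X i) \<subseteq> U" by auto
  have "\<forall>\<^sub>F x in F. \<forall>i\<in>{i. X i \<noteq> UNIV}. f x i \<in> X i"
  proof (rule eventually_ball_finite[OF H(3)], rule ballI)
    fix i assume "i \<in> {i. X i \<noteq> UNIV}"
    show "\<forall>\<^sub>F x in F. f x i \<in> X i"
      using H(1,2) assms by (auto intro!: topological_tendstoD simp: PiE_iff)
  qed
  then show "\<forall>\<^sub>F x in F. f x \<in> U"
  proof eventually_elim
    case (elim x)
    have "f x \<in> (\<Pi>\<^sub>E i\<in>UNIV. X i)"
      using elim by (auto simp: PiE_iff)
    then show ?case using H(4) by blast
  qed
qed

type_synonym 'n pt = "(nat \<Rightarrow> real^'n) \<times> real"

definition vupd :: "real^('n::finite) \<Rightarrow> 'n \<Rightarrow> real \<Rightarrow> real^'n" where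
  "vupd x i v = (\<chi> k. if k = i then v else x $ k)"

fun getc :: "(nat \<times> 'n::finite) option \<Rightarrow> 'n pt \<Rightarrow> real" where
  "getc None p = snd p"
| "getc (Some (j,i)) p = fst p j $ i"

fun setc :: "(nat \<times> 'n::finite) option \<Rightarrow> real \<Rightarrow> 'n pt \<Rightarrow> 'n pt" where
  "setc None v p = (fst p, v)"
| "setc (Some (j,i)) v p = ((fst p)(j := vupd (fst p j) i v), snd p)"

lemma getc_setc_same[simp]: "getc d (setc d v p) = v"
  by (cases d) (auto simp: vupd_def)

lemma getc_setc_other: "d' \<noteq> d \<Longrightarrow> getc d' (setc d v p) = getc d' p"
  by (cases d; cases d'; auto simp: vupd_def split: if_split_asm)

lemma pt_eq: "(\<And>d. getc d p = getc d q) \<Longrightarrow> p = q"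
proof -
  assume h: "\<And>d. getc d p = getc d q"
  have "snd p = snd q" using h[of None] by simp
  moreover have "fst p = fst q"
  proof
    fix j show "fst p j = fst q j" using h[of "Some (j, _)"] by (simp add: vec_eq_iff)
  qed
  ultimately show ?thesis by (simp add: prod_eq_iff)
qed

lemma setc_getc[simp]: "setc d (getc d p) p = p"
  by (rule pt_eq) (metis getc_setc_other getc_setc_same)

lemma setc_setc[simp]: "setc d v (setc d w p) = setc d v p"
  by (rule pt_eq) (metis getc_setc_other getc_setc_same)

lemma tendsto_pt:
  assumes "\<And>d. ((\<lambda>s. getc d (x s)) \<longlongrightarrow> getc d p) F"
  shows "(x \<longlongrightarrow> p) F"
proof -
  have "((\<lambda>s. (fst (x s), snd (x s))) \<longlongrightarrow> (fst p, snd p)) F"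
  proof (rule tendsto_Pair)
    show "((\<lambda>s. snd (x s)) \<longlongrightarrow> snd p) F" using assms[of None] by simp
    show "((\<lambda>s. fst (x s)) \<longlongrightarrow> fst p) F"
    proof (rule tendsto_fun_coord)
      fix j show "((\<lambda>s. fst (x s) j) \<longlongrightarrow> fst p j) F"
        by (rule vec_tendstoI) (use assms[of "Some (j, _)"] in simp)
    qed
  qed
  then show ?thesis by simp
qed

lemma mvt_gen:
  fixes \<phi> :: "real \<Rightarrow> real"
  assumes "\<And>v. (\<phi> has_real_derivative \<phi>' v) (at v)"
  shows "\<exists>\<xi>. \<bar>\<xi> - a\<bar> \<le> \<bar>b - a\<bar> \<and> \<phi> b - \<phi> a = (b - a) * \<phi>' \<xi>"
proof -
  have cont: "continuous_on S \<phi>" for S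
    using assms by (meson DERIV_isCont continuous_at_imp_continuous_on)
  have dif: "\<phi> differentiable (at x)" for x
    using assms real_differentiable_def by blast
  consider "a < b" | "b < a" | "a = b" by linarith
  then show ?thesis
  proof cases
    case 1
    then obtain l z where "a < z" "z < b" "DERIV \<phi> z :> l" "\<phi> b - \<phi> a = (b - a) * l"
      using MVT[OF 1 cont dif] by blast
    then show ?thesis using assms[of z] DERIV_unique by (intro exI[of _ z]) auto
  next
    case 2
    then obtain l z where "b < z" "z < a" "DERIV \<phi> z :> l" "\<phi> a - \<phi> b = (a - b) * l"
      using MVT[OF 2 cont dif] by blast
    moreover have "l = \<phi>' z" using assms[of z] DERIV_unique \<open>DERIV \<phi> z :> l\<close> by blast
    ultimately show ?thesis
      by (intro exI[of _ z]) (auto simp: algebra_simps)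
  qed auto
qed

lemma chain_aux:
  fixes f :: "('n::finite) pt \<Rightarrow> real"
  assumes "finite D"
  shows "\<forall>x. (\<forall>d\<in>D. continuous_on UNIV (g d)) \<longrightarrow>
    (\<forall>d\<in>D. \<forall>p v. ((\<lambda>w. f (setc d w p)) has_real_derivative g d (setc d v p)) (at v)) \<longrightarrow>
    (\<forall>d\<in>D. ((\<lambda>s. getc d (x s)) has_real_derivative x' d) (at s0)) \<longrightarrow>
    (\<forall>d s. d \<notin> D \<longrightarrow> getc d (x s) = getc d (x s0)) \<longrightarrow>
    ((\<lambda>s. f (x s)) has_real_derivative (\<Sum>d\<in>D. g d (x s0) * x' d)) (at s0)"
  using assms
proof (induction D rule: finite_induct)
  case empty
  show ?case
  proof (intro allI impI)
    fix x :: "real \<Rightarrow> 'n pt"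
    assume "\<forall>d s. d \<notin> {} \<longrightarrow> getc d (x s) = getc d (x s0)"
    then have e: "x s = x s0" for s by (intro pt_eq) auto
    have "(\<lambda>s. f (x s)) = (\<lambda>s. f (x s0))" by (intro ext, subst e, rule refl)
    then show "((\<lambda>s. f (x s)) has_real_derivative (\<Sum>d\<in>{}. g d (x s0) * x' d)) (at s0)"
      by simp
  qed
next
  case (insert d D)
  show ?case
  proof (intro allI impI)
    fix x :: "real \<Rightarrow> 'n pt"
    assume gc: "\<forall>d'\<in>insert d D. continuous_on UNIV (g d')"
      and hd: "\<forall>d'\<in>insert d D. \<forall>p v. ((\<lambda>w. f (setc d' w p)) has_real_derivative g d' (setc d' v p)) (at v)"
      and xd: "\<forall>d'\<in>insert d D. ((\<lambda>s. getc d' (x s)) has_real_derivative x' d') (at s0)"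
      and xc: "\<forall>d' s. d' \<notin> insert d D \<longrightarrow> getc d' (x s) = getc d' (x s0)"
    define v0 where "v0 = getc d (x s0)"
    define xt where "xt s = setc d v0 (x s)" for s
    have xt0: "xt s0 = x s0" by (simp add: xt_def v0_def)
    have i1: "\<forall>d'\<in>D. continuous_on UNIV (g d')" using gc by auto
    have i2: "\<forall>d'\<in>D. \<forall>p v. ((\<lambda>w. f (setc d' w p)) has_real_derivative g d' (setc d' v p)) (at v)"
        using hd by auto
    have i3: "\<forall>d'\<in>D. ((\<lambda>s. getc d' (xt s)) has_real_derivative x' d') (at s0)"
    proof
      fix d' assume "d' \<in> D"
      then have "d' \<noteq> d" using insert.hyps(2) by auto
      then show "((\<lambda>s. getc d' (xt s)) has_real_derivative x' d') (at s0)"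
        using xd \<open>d' \<in> D\<close> by (simp add: xt_def getc_setc_other)
    qed
    have i4: "\<forall>d' s. d' \<notin> D \<longrightarrow> getc d' (xt s) = getc d' (xt s0)"
    proof (intro allI impI)
      fix d' s assume "d' \<notin> D"
      show "getc d' (xt s) = getc d' (xt s0)"
      proof (cases "d' = d")
        case True then show ?thesis by (simp add: xt_def)
      next
        case False
        then have "getc d' (x s) = getc d' (x s0)" using xc \<open>d' \<notin> D\<close> by blast
        then show ?thesis using False by (simp add: xt_def getc_setc_other)
      qed
    qed
    have IH: "((\<lambda>s. f (xt s)) has_real_derivative (\<Sum>d'\<in>D. g d' (xt s0) * x' d')) (at s0)"
      using insert.IH i1 i2 i3 i4 by blast
    define u where "u s = getc d (x s)" for s
    have ud: "(u has_real_derivative x' d) (at s0)" using xd unfolding u_def[abs_def] by simp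
    then obtain \<phi>v where \<phi>v: "\<And>z. u z - u s0 = \<phi>v z * (z - s0)" "isCont \<phi>v s0" "\<phi>v s0 = x' d"
      using CARAT_DERIV by blast
    have hdd: "((\<lambda>w. f (setc d w (x s))) has_real_derivative g d (setc d v (x s))) (at v)" for s v
      using hd by blast
    have "\<exists>\<xi>. \<bar>\<xi> - v0\<bar> \<le> \<bar>u s - v0\<bar> \<and>
        f (setc d (u s) (x s)) - f (setc d v0 (x s)) = (u s - v0) * g d (setc d \<xi> (x s))" for s
      by (rule mvt_gen[OF hdd])
    then obtain \<xi> where \<xi>: "\<And>s. \<bar>\<xi> s - v0\<bar> \<le> \<bar>u s - v0\<bar>"
       "\<And>s. f (setc d (u s) (x s)) - f (setc d v0 (x s)) = (u s - v0) * g d (setc d (\<xi> s) (x s))"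
      by metis
    define a where "a = (\<lambda>s. g d (setc d (\<xi> s) (x s)))"
    have \<xi>0: "\<xi> s0 = v0" using \<xi>(1)[of s0] by (simp add: u_def v0_def)
    have h1: "f (x s) - f (xt s) = (a s * \<phi>v s) * (s - s0)" for s
      using \<xi>(2)[of s] \<phi>v(1)[of s] by (simp add: u_def xt_def a_def v0_def)
    have ucont: "isCont u s0" using ud DERIV_isCont by blast
    have ytend: "((\<lambda>s. setc d (\<xi> s) (x s)) \<longlongrightarrow> x s0) (at s0)"
    proof (rule tendsto_pt)
      fix d'
      show "((\<lambda>s. getc d' (setc d (\<xi> s) (x s))) \<longlongrightarrow> getc d' (x s0)) (at s0)"
      proof (cases "d' = d")
        case True
        have "((\<lambda>s. u s - v0) \<longlongrightarrow> 0) (at s0)"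
          using ucont unfolding isCont_def u_def[abs_def] v0_def by (rule LIM_zero)
        then have "((\<lambda>s. \<xi> s - v0) \<longlongrightarrow> 0) (at s0)"
          by (rule tendsto_0_le[where K=1]) (auto intro: always_eventually simp: \<xi>(1))
        then have "(\<xi> \<longlongrightarrow> v0) (at s0)" by (simp add: LIM_zero_iff)
        then show ?thesis using True by (simp add: v0_def)
      next
        case False
        then have e: "getc d' (setc d (\<xi> s) (x s)) = getc d' (x s)" for s
          by (simp add: getc_setc_other)
        show ?thesis
        proof (cases "d' \<in> D")
          case True
          then have "isCont (\<lambda>s. getc d' (x s)) s0" using xd DERIV_isCont by blast
          then show ?thesis by (simp add: e isCont_def)
        next
          case f2: False
          then have "\<forall>s. getc d' (x s) = getc d' (x s0)" using xc False by blast
          then have "(\<lambda>s. getc d' (setc d (\<xi> s) (x s))) = (\<lambda>s. getc d' (x s0))"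
            unfolding e by blast
          then show ?thesis by simp
        qed
      qed
    qed
    have acont: "isCont a s0"
    proof -
      have "isCont (g d) (x s0)" using gc continuous_on_eq_continuous_at by blast
      then have "((\<lambda>s. g d (setc d (\<xi> s) (x s))) \<longlongrightarrow> g d (x s0)) (at s0)"
        using ytend isCont_tendsto_compose by blast
      moreover have "a s0 = g d (x s0)" by (simp add: a_def \<xi>0 v0_def)
      ultimately show ?thesis by (simp add: isCont_def a_def)
    qed
    have D1: "((\<lambda>s. f (x s) - f (xt s)) has_real_derivative a s0 * \<phi>v s0) (at s0)"
    proof -
      have "isCont (\<lambda>s. a s * \<phi>v s) s0" using acont \<phi>v(2) by (intro isCont_mult)
      then show ?thesis
        unfolding CARAT_DERIV using h1 xt0 by (intro exI[of _ "\<lambda>s. a s * \<phi>v s"]) auto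
    qed
    have "((\<lambda>s. (f (x s) - f (xt s)) + f (xt s)) has_real_derivative
        a s0 * \<phi>v s0 + (\<Sum>d'\<in>D. g d' (xt s0) * x' d')) (at s0)"
      by (rule DERIV_add[OF D1 IH])
    moreover have "a s0 * \<phi>v s0 + (\<Sum>d'\<in>D. g d' (xt s0) * x' d') = (\<Sum>d'\<in>insert d D. g d' (x s0) * x' d')"
      using insert.hyps by (simp add: xt0 \<phi>v(3) a_def \<xi>0 v0_def)
    ultimately show "((\<lambda>s. f (x s)) has_real_derivative (\<Sum>d'\<in>insert d D. g d' (x s0) * x' d')) (at s0)"
      by simp
  qed
qed



definition uc :: "((nat \<Rightarrow> real^'n) \<Rightarrow> real \<Rightarrow> real) \<Rightarrow> (nat \<Rightarrow> real^'n) \<times> real \<Rightarrow> real" where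
  "uc F = (\<lambda>p. F (fst p) (snd p))"

fun shiftp :: "(nat \<times> 'n::finite) option \<Rightarrow> real \<Rightarrow> (nat \<Rightarrow> real^'n) \<Rightarrow> real \<Rightarrow> 'n pt" where
  "shiftp None s J t = (J, t + s)"
| "shiftp (Some (j,i)) s J t = (J(j := J j + s *\<^sub>R axis i 1), t)"

lemma shiftp_0[simp]: "shiftp d 0 J t = (J, t)"
  by (cases d) auto

definition pdir :: "(nat \<times> 'n::finite) option \<Rightarrow> ((nat \<Rightarrow> real^'n) \<Rightarrow> real \<Rightarrow> real) \<Rightarrow> (nat \<Rightarrow> real^'n) \<Rightarrow> real \<Rightarrow> real" where
  "pdir d F J t = deriv (\<lambda>s. uc F (shiftp d s J t)) 0"

definition hasD :: "(nat \<times> 'n::finite) option \<Rightarrow> ((nat \<Rightarrow> real^'n) \<Rightarrow> real \<Rightarrow> real) \<Rightarrow> ((nat \<Rightarrow> real^'n) \<Rightarrow> real \<Rightarrow> real) \<Rightarrow> bool" where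
  "hasD d F G \<longleftrightarrow> (\<forall>J t. ((\<lambda>s. uc F (shiftp d s J t)) has_real_derivative G J t) (at 0))"

lemma pdir_None: "pdir None F = dtJ F"
  by (intro ext) (simp add: pdir_def dtJ_def uc_def)

lemma pdir_Some: "pdir (Some (j,i)) F J t = gradJ j F J t $ i"
  by (simp add: pdir_def gradJ_def uc_def)

lemma hasD_unique: "hasD d F G \<Longrightarrow> pdir d F = G"
  unfolding hasD_def pdir_def by (intro ext) (simp add: DERIV_imp_deriv)

lemma hasD_pdir: "hasD d F G \<Longrightarrow> hasD d F (pdir d F)"
  using hasD_unique by metis

lemma vupd_axis: "vupd x i (x $ i + s) = x + s *\<^sub>R axis i 1"
  by (simp add: vupd_def vec_eq_iff axis_def)

lemma shiftp_setc: "shiftp d s J t = setc d (getc d (J,t) + s) (J,t)"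
  by (cases d) (auto simp: vupd_axis)

lemma hasD_setc:
  assumes "hasD d F G"
  shows "((\<lambda>w. uc F (setc d w p)) has_real_derivative uc G (setc d v p)) (at v)"
proof -
  obtain J t where q: "setc d v p = (J, t)" by (cases "setc d v p") auto
  have "((\<lambda>s. uc F (shiftp d s J t)) has_real_derivative G J t) (at 0)"
    using assms by (simp add: hasD_def)
  moreover have "shiftp d s J t = setc d (s + v) p" for s
    unfolding shiftp_setc q[symmetric] by (simp add: add.commute)
  ultimately have "((\<lambda>s. uc F (setc d (s + v) p)) has_real_derivative uc G (setc d v p)) (at 0)"
    using q by (simp add: uc_def)
  then show ?thesis using DERIV_shift[of "\<lambda>w. uc F (setc d w p)" "uc G (setc d v p)" 0 v] by simp
qed

lemma hasD_forms:
  assumes "\<forall>d. \<exists>G. hasD d F G \<and> P G"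
  shows "(\<forall>j i. \<exists>G. (\<forall>J t. ((\<lambda>s. F (J(j := J j + s *\<^sub>R axis i 1)) t) has_real_derivative G J t) (at 0)) \<and> P G)
     \<and> (\<exists>G. (\<forall>J t. ((\<lambda>s. F J (t + s)) has_real_derivative G J t) (at 0)) \<and> P G)"
proof (intro conjI allI)
  fix j i
  obtain G where "hasD (Some (j,i)) F G" "P G" using assms by blast
  then show "\<exists>G. (\<forall>J t. ((\<lambda>s. F (J(j := J j + s *\<^sub>R axis i 1)) t) has_real_derivative G J t) (at 0)) \<and> P G"
    by (intro exI[of _ G]) (simp add: hasD_def uc_def)
next
  obtain G where "hasD None F G" "P G" using assms by blast
  then show "\<exists>G. (\<forall>J t. ((\<lambda>s. F J (t + s)) has_real_derivative G J t) (at 0)) \<and> P G"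
    by (intro exI[of _ G]) (simp add: hasD_def uc_def)
qed

lemma smoothJ_iff:
  "smoothJ F \<longleftrightarrow> continuous_on UNIV (uc F) \<and> (\<forall>d. \<exists>G. hasD d F G \<and> smoothJ G)"
proof
  assume "smoothJ F"
  then show "continuous_on UNIV (uc F) \<and> (\<forall>d. \<exists>G. hasD d F G \<and> smoothJ G)"
  proof cases
    case 1
    show ?thesis
    proof (intro conjI allI)
      show "continuous_on UNIV (uc F)" using 1 by (simp add: uc_def)
      fix d show "\<exists>G. hasD d F G \<and> smoothJ G"
      proof (cases d)
        case None then show ?thesis using 1(3) by (auto simp: hasD_def uc_def)
      next
        case (Some a) then obtain j i where "d = Some (j,i)" by (cases a) auto
        then show ?thesis using 1(2) by (auto simp: hasD_def uc_def)
      qed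
    qed
  qed
next
  assume h: "continuous_on UNIV (uc F) \<and> (\<forall>d. \<exists>G. hasD d F G \<and> smoothJ G)"
  then have "continuous_on UNIV (\<lambda>p. F (fst p) (snd p))" by (simp add: uc_def)
  with hasD_forms[of F smoothJ] h show "smoothJ F"
    by (blast intro: smoothJ.intros)
qed

lemma smoothJ_hasD: "smoothJ F \<Longrightarrow> hasD d F (pdir d F)"
  using smoothJ_iff hasD_pdir by metis

lemma smoothJ_pdir: "smoothJ F \<Longrightarrow> smoothJ (pdir d F)"
  using smoothJ_iff hasD_unique by metis

lemma smoothJ_cont: "smoothJ F \<Longrightarrow> continuous_on UNIV (uc F)"
  using smoothJ_iff by metis

lemma smoothJ_coinduct':
  assumes "X F"
    and h: "\<And>F. X F \<Longrightarrow> continuous_on UNIV (uc F) \<and> (\<forall>d. \<exists>G. hasD d F G \<and> (X G \<or> smoothJ G))"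
  shows "smoothJ F"
proof (rule smoothJ.coinduct[of X, OF assms(1)])
  fix x assume "X x"
  then have "continuous_on UNIV (\<lambda>p. x (fst p) (snd p))" "\<forall>d. \<exists>G. hasD d x G \<and> (X G \<or> smoothJ G)"
    using h by (auto simp: uc_def)
  with hasD_forms[of x "\<lambda>G. X G \<or> smoothJ G"]
  show "\<exists>F. x = F \<and> continuous_on UNIV (\<lambda>p. F (fst p) (snd p)) \<and>
      (\<forall>j i. \<exists>G. (\<forall>J t. ((\<lambda>s. F (J(j := J j + s *\<^sub>R axis i 1)) t) has_real_derivative G J t) (at 0)) \<and> (X G \<or> smoothJ G)) \<and>
      (\<exists>G. (\<forall>J t. ((\<lambda>s. F J (t + s)) has_real_derivative G J t) (at 0)) \<and> (X G \<or> smoothJ G))"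
    by blast
qed

lemma hasD_const: "hasD d (\<lambda>J t. c) (\<lambda>J t. 0)"
  by (simp add: hasD_def uc_def)

lemma smoothJ_const: "smoothJ (\<lambda>J t. c)"
  by (rule smoothJ_coinduct'[where X="\<lambda>F. \<exists>c. F = (\<lambda>J t. c)"])
     (auto simp: uc_def hasD_const intro!: exI[of _ "\<lambda>J t. 0"])

lemma hasD_add: "hasD d F F' \<Longrightarrow> hasD d G G' \<Longrightarrow> hasD d (\<lambda>J t. F J t + G J t) (\<lambda>J t. F' J t + G' J t)"
  unfolding hasD_def uc_def by (auto intro: DERIV_add)

lemma hasD_mult: "hasD d F F' \<Longrightarrow> hasD d G G' \<Longrightarrow>
    hasD d (\<lambda>J t. F J t * G J t) (\<lambda>J t. F' J t * G J t + F J t * G' J t)"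
  unfolding hasD_def uc_def
  by (auto intro!: derivative_eq_intros simp: algebra_simps)

inductive_set PS :: "((nat \<Rightarrow> real^'n::finite) \<Rightarrow> real \<Rightarrow> real) set" where
  base: "smoothJ F \<Longrightarrow> F \<in> PS"
| add: "F \<in> PS \<Longrightarrow> G \<in> PS \<Longrightarrow> (\<lambda>J t. F J t + G J t) \<in> PS"
| mul: "F \<in> PS \<Longrightarrow> G \<in> PS \<Longrightarrow> (\<lambda>J t. F J t * G J t) \<in> PS"

lemma PS_prop: "F \<in> PS \<Longrightarrow> continuous_on UNIV (uc F) \<and> (\<forall>d. \<exists>G. hasD d F G \<and> G \<in> PS)"
proof (induction rule: PS.induct)
  case (base F)
  then show ?case using smoothJ_iff PS.base by metis
next
  case (add F G)
  show ?case
  proof (intro conjI allI)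
    show "continuous_on UNIV (uc (\<lambda>J t. F J t + G J t))"
      using add.IH by (simp add: uc_def continuous_on_add)
    fix d
    obtain F' where F': "hasD d F F'" "F' \<in> PS" using add.IH(1) by blast
    obtain G' where G': "hasD d G G'" "G' \<in> PS" using add.IH(2) by blast
    have "hasD d (\<lambda>J t. F J t + G J t) (\<lambda>J t. F' J t + G' J t)" by (rule hasD_add[OF F'(1) G'(1)])
    moreover have "(\<lambda>J t. F' J t + G' J t) \<in> PS" by (rule PS.add[OF F'(2) G'(2)])
    ultimately show "\<exists>H. hasD d (\<lambda>J t. F J t + G J t) H \<and> H \<in> PS" by blast
  qed
next
  case (mul F G)
  show ?case
  proof (intro conjI allI)
    show "continuous_on UNIV (uc (\<lambda>J t. F J t * G J t))"
      using mul.IH by (simp add: uc_def continuous_on_mult)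
    fix d
    obtain F' where F': "hasD d F F'" "F' \<in> PS" using mul.IH(1) by blast
    obtain G' where G': "hasD d G G'" "G' \<in> PS" using mul.IH(2) by blast
    have "hasD d (\<lambda>J t. F J t * G J t) (\<lambda>J t. F' J t * G J t + F J t * G' J t)"
      by (rule hasD_mult[OF F'(1) G'(1)])
    moreover have "(\<lambda>J t. F' J t * G J t + F J t * G' J t) \<in> PS"
      by (rule PS.add[OF PS.mul[OF F'(2) mul.hyps(2)] PS.mul[OF mul.hyps(1) G'(2)]])
    ultimately show "\<exists>H. hasD d (\<lambda>J t. F J t * G J t) H \<and> H \<in> PS" by blast
  qed
qed

lemma PS_smoothJ:
  assumes "F \<in> PS" shows "smoothJ F"
proof (rule smoothJ_coinduct'[where X="\<lambda>F. F \<in> PS", OF assms])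
  fix F :: "(nat \<Rightarrow> real^'a) \<Rightarrow> real \<Rightarrow> real" assume "F \<in> PS"
  from PS_prop[OF this]
  show "continuous_on UNIV (uc F) \<and> (\<forall>d. \<exists>G. hasD d F G \<and> (G \<in> PS \<or> smoothJ G))" by blast
qed

lemma smoothJ_add: "smoothJ F \<Longrightarrow> smoothJ G \<Longrightarrow> smoothJ (\<lambda>J t. F J t + G J t)"
  by (rule PS_smoothJ[OF PS.add[OF PS.base PS.base]])

lemma smoothJ_mult: "smoothJ F \<Longrightarrow> smoothJ G \<Longrightarrow> smoothJ (\<lambda>J t. F J t * G J t)"
  by (rule PS_smoothJ[OF PS.mul[OF PS.base PS.base]])

lemma smoothJ_sum: "finite A \<Longrightarrow> (\<And>a. a \<in> A \<Longrightarrow> smoothJ (F a)) \<Longrightarrow> smoothJ (\<lambda>J t. \<Sum>a\<in>A. F a J t)"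
proof (induction A rule: finite_induct)
  case empty then show ?case by (simp add: smoothJ_const)
next
  case (insert x A)
  then show ?case using smoothJ_add[of "F x" "\<lambda>J t. \<Sum>a\<in>A. F a J t"] by simp
qed

lemma smoothJ_scale: "smoothJ F \<Longrightarrow> smoothJ (\<lambda>J t. c * F J t)"
  by (rule smoothJ_mult[OF smoothJ_const])

lemma hasD_coord: "hasD d (\<lambda>J t. J p $ m)
   (\<lambda>J t. if d = Some (p, m) then 1 else 0)"
proof (cases d)
  case None then show ?thesis by (simp add: hasD_def uc_def)
next
  case (Some a)
  then obtain j i where d: "d = Some (j,i)" by (cases a) auto
  show ?thesis
  proof (cases "j = p \<and> i = m")
    case True
    have e: "(\<lambda>s. uc (\<lambda>J t. J p $ m) (shiftp d s J t)) = (\<lambda>s. J p $ m + s)" for J t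
      using True d by (simp add: uc_def)
    have "((\<lambda>s. c + s) has_real_derivative 1) (at 0)" for c :: real
      using DERIV_add[OF DERIV_const DERIV_ident] by simp
    then show ?thesis using True d unfolding hasD_def e by (simp del: fun_upd_apply)
  next
    case False
    have e: "(\<lambda>s. uc (\<lambda>J t. J p $ m) (shiftp d s J t)) = (\<lambda>s. J p $ m)" for J t
    proof (cases "j = p")
      case True then have "i \<noteq> m" using False by simp
      then show ?thesis using d True by (simp add: uc_def axis_def)
    next
      case False then show ?thesis using d by (simp add: uc_def)
    qed
    have ne: "d \<noteq> Some (p, m)" using False d by simp
    show ?thesis unfolding hasD_def
    proof (intro allI)
      fix J t
      have "((\<lambda>s. J p $ m) has_real_derivative 0) (at 0)" by (rule DERIV_const)
      then show "((\<lambda>s. uc (\<lambda>J t. J p $ m) (shiftp d s J t)) has_real_derivative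
          (if d = Some (p, m) then 1 else 0)) (at 0)"
        unfolding e[of J t] if_not_P[OF ne] .
    qed
  qed
qed

lemma smoothJ_coord: "smoothJ (\<lambda>J t. J p $ m)"
proof (rule smoothJ_coinduct'[where X="\<lambda>F. F = (\<lambda>J t. J p $ m)"])
  fix F :: "(nat \<Rightarrow> real^'a) \<Rightarrow> real \<Rightarrow> real"
  assume F: "F = (\<lambda>J t. J p $ m)"
  have "continuous_on UNIV (\<lambda>x::'a pt. fst x p)"
    by (rule continuous_on_compose2[OF continuous_on_product_coordinates continuous_on_fst[OF continuous_on_id]]) auto
  then have "continuous_on UNIV (\<lambda>x::'a pt. fst x p $ m)" by (rule continuous_on_component)
  then have "continuous_on UNIV (uc F)" by (simp add: F uc_def)
  moreover have "\<forall>d. \<exists>G. hasD d F G \<and> (G = (\<lambda>J t. J p $ m) \<or> smoothJ G)"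
  proof
    fix d
    show "\<exists>G. hasD d F G \<and> (G = (\<lambda>J t. J p $ m) \<or> smoothJ G)"
      unfolding F
      by (rule exI[of _ "\<lambda>J t. if d = Some (p,m) then 1 else 0"], rule conjI[OF hasD_coord disjI2],
          rule smoothJ_const)
  qed
  ultimately show "continuous_on UNIV (uc F) \<and> (\<forall>d. \<exists>G. hasD d F G \<and> (G = (\<lambda>J t. J p $ m) \<or> smoothJ G))"
    by (rule conjI)
qed (rule refl)



lemma axis_Basis: "(axis i 1 :: real^'n::finite) \<in> Basis"
  by (auto simp: Basis_vec_def)

lemma smoothE_J:
  fixes f :: "(real^'n::finite) \<times> real \<Rightarrow> real"
  assumes "smoothE f"
  shows "smoothJ (\<lambda>J t. f (J 0, t))"
proof (rule smoothJ_coinduct'[where X="\<lambda>F. \<exists>f. smoothE f \<and> F = (\<lambda>J t. f (J 0, t))"])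
  show "\<exists>fa. smoothE fa \<and> (\<lambda>J t. f (J 0, t)) = (\<lambda>J t. fa (J 0, t))" using assms by blast
next
  fix F :: "(nat \<Rightarrow> real^'n) \<Rightarrow> real \<Rightarrow> real"
  assume "\<exists>f. smoothE f \<and> F = (\<lambda>J t. f (J 0, t))"
  then obtain f where sf: "smoothE f" and F: "F = (\<lambda>J t. f (J 0, t))" by blast
  from sf have cf: "continuous_on UNIV f"
    and df: "\<forall>b\<in>Basis. \<exists>g. (\<forall>x. ((\<lambda>s. f (x + s *\<^sub>R b)) has_real_derivative g x) (at 0)) \<and> smoothE g"
    using smoothE.simps[of f] by blast+
  have c0: "continuous_on UNIV (\<lambda>x::'n pt. fst x 0)"
    by (rule continuous_on_compose2[OF continuous_on_product_coordinates continuous_on_fst[OF continuous_on_id]]) auto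
  have "continuous_on UNIV (\<lambda>x::'n pt. (fst x 0, snd x))"
    by (rule continuous_on_Pair[OF c0 continuous_on_snd[OF continuous_on_id]])
  then have "continuous_on UNIV (\<lambda>x::'n pt. f (fst x 0, snd x))"
    by (rule continuous_on_compose2[OF cf]) auto
  then have "continuous_on UNIV (uc F)" by (simp add: uc_def F)
  moreover have "\<forall>d. \<exists>G. hasD d F G \<and> ((\<exists>f. smoothE f \<and> G = (\<lambda>J t. f (J 0, t))) \<or> smoothJ G)"
  proof
    fix d :: "(nat \<times> 'n) option"
    show "\<exists>G. hasD d F G \<and> ((\<exists>f. smoothE f \<and> G = (\<lambda>J t. f (J 0, t))) \<or> smoothJ G)"
    proof (cases d)
      case None
      have "((0::real^'n), (1::real)) \<in> Basis" by (simp add: Basis_prod_def)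
      then obtain g where g: "\<forall>x. ((\<lambda>s. f (x + s *\<^sub>R (0, 1))) has_real_derivative g x) (at 0)" "smoothE g"
        using df by blast
      have "hasD d F (\<lambda>J t. g (J 0, t))"
        unfolding hasD_def using g(1) None by (simp add: uc_def F)
      then show ?thesis using g(2) by blast
    next
      case (Some a)
      then obtain j i where d: "d = Some (j, i)" by (cases a) auto
      show ?thesis
      proof (cases "j = 0")
        case True
        have "(axis i 1 :: real^'n, 0::real) \<in> Basis" by (simp add: Basis_prod_def axis_Basis)
        then obtain g where g: "\<forall>x. ((\<lambda>s. f (x + s *\<^sub>R (axis i 1, 0))) has_real_derivative g x) (at 0)" "smoothE g"
          using df by blast
        have "hasD d F (\<lambda>J t. g (J 0, t))"
          unfolding hasD_def using g(1) d True by (simp add: uc_def F)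
        then show ?thesis using g(2) by blast
      next
        case False
        have "hasD d F (\<lambda>J t. 0)"
          unfolding hasD_def using d False by (simp add: uc_def F)
        then show ?thesis using smoothJ_const by blast
      qed
    qed
  qed
  ultimately show "continuous_on UNIV (uc F) \<and> (\<forall>d. \<exists>G. hasD d F G \<and> ((\<exists>f. smoothE f \<and> G = (\<lambda>J t. f (J 0, t))) \<or> smoothJ G))"
    by blast
qed

lemma dep_fun_upd: "(\<forall>j\<le>N. J j = J' j) \<Longrightarrow> (\<forall>j'\<le>N. (J(j := J j + a)) j' = (J'(j := J' j + a)) j')"
  by auto

lemma dep_pdir:
  fixes F :: "(nat \<Rightarrow> real^'n::finite) \<Rightarrow> real \<Rightarrow> real"
  shows "depends_upto N F \<Longrightarrow> depends_upto N (pdir d F)"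
  unfolding depends_upto_def
proof (intro allI impI)
  fix J J' :: "nat \<Rightarrow> real^'n" and t assume F: "\<forall>J J' t. (\<forall>j\<le>N. J j = J' j) \<longrightarrow> F J t = F J' t" and h: "\<forall>j\<le>N. J j = J' j"
  have "uc F (shiftp d s J t) = uc F (shiftp d s J' t)" for s
  proof (cases d)
    case None then show ?thesis using F h by (simp add: uc_def)
  next
    case (Some a) then obtain j i where d: "d = Some (j,i)" by (cases a) auto
    show ?thesis using F h d by (simp add: uc_def)
  qed
  then show "pdir d F J t = pdir d F J' t" by (simp add: pdir_def)
qed

lemma dep_zero:
  fixes F :: "(nat \<Rightarrow> real^'n::finite) \<Rightarrow> real \<Rightarrow> real"
  shows "depends_upto N F \<Longrightarrow> N < j \<Longrightarrow> pdir (Some (j,i)) F = (\<lambda>J t. 0)"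
proof (intro ext)
  fix J t assume F: "depends_upto N F" and j: "N < j"
  have "uc F (shiftp (Some (j,i)) s J t) = F J t" for s
    using F j unfolding depends_upto_def by (simp add: uc_def)
  then show "pdir (Some (j, i)) F J t = 0" by (simp add: pdir_def)
qed

lemma dep_mono: "depends_upto N F \<Longrightarrow> N \<le> M \<Longrightarrow> depends_upto M F"
  unfolding depends_upto_def by auto

section \<open>Clairaut\<close>

lemma setc_comm: "d1 \<noteq> d2 \<Longrightarrow> setc d1 a (setc d2 b p) = setc d2 b (setc d1 a p)"
  by (rule pt_eq) (metis getc_setc_other getc_setc_same)

lemma delta_rep:
  fixes f f1 f12 :: "('n::finite) pt \<Rightarrow> real"
  assumes ne: "d1 \<noteq> d2"
    and h1: "\<And>p v. ((\<lambda>w. f (setc d1 w p)) has_real_derivative f1 (setc d1 v p)) (at v)"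
    and h12: "\<And>p v. ((\<lambda>w. f1 (setc d2 w p)) has_real_derivative f12 (setc d2 v p)) (at v)"
  shows "\<exists>\<xi> \<eta>. \<bar>\<xi> - a0\<bar> \<le> \<bar>h\<bar> \<and> \<bar>\<eta> - b0\<bar> \<le> \<bar>h\<bar> \<and>
    f (setc d1 (a0+h) (setc d2 (b0+h) p)) - f (setc d1 (a0+h) (setc d2 b0 p))
    - f (setc d1 a0 (setc d2 (b0+h) p)) + f (setc d1 a0 (setc d2 b0 p)) = h * (h * f12 (setc d1 \<xi> (setc d2 \<eta> p)))"
proof -
  define g where "g a = f (setc d1 a (setc d2 (b0+h) p)) - f (setc d1 a (setc d2 b0 p))" for a
  define g' where "g' a = f1 (setc d1 a (setc d2 (b0+h) p)) - f1 (setc d1 a (setc d2 b0 p))" for a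
  have gd: "(g has_real_derivative g' v) (at v)" for v
    unfolding g_def g'_def by (intro DERIV_diff h1)
  obtain \<xi> where \<xi>: "\<bar>\<xi> - a0\<bar> \<le> \<bar>(a0 + h) - a0\<bar>" "g (a0 + h) - g a0 = ((a0 + h) - a0) * g' \<xi>"
    using mvt_gen[of g g', OF gd] by blast
  define k where "k b = f1 (setc d2 b (setc d1 \<xi> p))" for b
  have kd: "(k has_real_derivative f12 (setc d2 v (setc d1 \<xi> p))) (at v)" for v
    unfolding k_def by (rule h12)
  obtain \<eta> where \<eta>: "\<bar>\<eta> - b0\<bar> \<le> \<bar>(b0 + h) - b0\<bar>"
      "k (b0 + h) - k b0 = ((b0 + h) - b0) * f12 (setc d2 \<eta> (setc d1 \<xi> p))"
    using mvt_gen[of k "\<lambda>v. f12 (setc d2 v (setc d1 \<xi> p))", OF kd] by blast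
  have "g' \<xi> = k (b0 + h) - k b0"
    unfolding g'_def k_def using setc_comm[OF ne] by simp
  then have "g (a0 + h) - g a0 = h * (h * f12 (setc d1 \<xi> (setc d2 \<eta> p)))"
    using \<xi>(2) \<eta>(2) setc_comm[OF ne] by simp
  then show ?thesis using \<xi>(1) \<eta>(1) by (intro exI[of _ \<xi>] exI[of _ \<eta>]) (auto simp: g_def)
qed

lemma clairaut:
  fixes f f1 f2 f12 f21 :: "('n::finite) pt \<Rightarrow> real"
  assumes ne: "d1 \<noteq> d2"
    and h1: "\<And>p v. ((\<lambda>w. f (setc d1 w p)) has_real_derivative f1 (setc d1 v p)) (at v)"
    and h2: "\<And>p v. ((\<lambda>w. f (setc d2 w p)) has_real_derivative f2 (setc d2 v p)) (at v)"
    and h12: "\<And>p v. ((\<lambda>w. f1 (setc d2 w p)) has_real_derivative f12 (setc d2 v p)) (at v)"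
    and h21: "\<And>p v. ((\<lambda>w. f2 (setc d1 w p)) has_real_derivative f21 (setc d1 v p)) (at v)"
    and c12: "continuous_on UNIV f12" and c21: "continuous_on UNIV f21"
  shows "f12 p = f21 p"
proof -
  define a0 where "a0 = getc d1 p"
  define b0 where "b0 = getc d2 p"
  define Q where "Q a b = setc d1 a (setc d2 b p)" for a b
  have ne': "d2 \<noteq> d1" using ne by simp
  have "\<forall>h. \<exists>\<xi> \<eta>. \<bar>\<xi> - a0\<bar> \<le> \<bar>h\<bar> \<and> \<bar>\<eta> - b0\<bar> \<le> \<bar>h\<bar> \<and>
    f (Q (a0+h) (b0+h)) - f (Q (a0+h) b0) - f (Q a0 (b0+h)) + f (Q a0 b0) = h * (h * f12 (Q \<xi> \<eta>))"
    unfolding Q_def using delta_rep[OF ne h1 h12] by blast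
  then obtain \<xi> \<eta> where A: "\<And>h. \<bar>\<xi> h - a0\<bar> \<le> \<bar>h\<bar>" "\<And>h. \<bar>\<eta> h - b0\<bar> \<le> \<bar>h\<bar>"
    "\<And>h. f (Q (a0+h) (b0+h)) - f (Q (a0+h) b0) - f (Q a0 (b0+h)) + f (Q a0 b0) = h * (h * f12 (Q (\<xi> h) (\<eta> h)))"
    by metis
  have "\<forall>h. \<exists>\<xi> \<eta>. \<bar>\<xi> - b0\<bar> \<le> \<bar>h\<bar> \<and> \<bar>\<eta> - a0\<bar> \<le> \<bar>h\<bar> \<and>
    f (setc d2 (b0+h) (setc d1 (a0+h) p)) - f (setc d2 (b0+h) (setc d1 a0 p))
    - f (setc d2 b0 (setc d1 (a0+h) p)) + f (setc d2 b0 (setc d1 a0 p)) = h * (h * f21 (setc d2 \<xi> (setc d1 \<eta> p)))"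
    using delta_rep[OF ne' h2 h21] by blast
  then obtain \<xi>' \<eta>' where B: "\<And>h. \<bar>\<xi>' h - b0\<bar> \<le> \<bar>h\<bar>" "\<And>h. \<bar>\<eta>' h - a0\<bar> \<le> \<bar>h\<bar>"
    "\<And>h. f (Q (a0+h) (b0+h)) - f (Q a0 (b0+h)) - f (Q (a0+h) b0) + f (Q a0 b0) = h * (h * f21 (Q (\<eta>' h) (\<xi>' h)))"
    unfolding Q_def using setc_comm[OF ne] by metis
  have eq: "f12 (Q (\<xi> h) (\<eta> h)) = f21 (Q (\<eta>' h) (\<xi>' h))" if "h \<noteq> 0" for h
  proof -
    have "h * (h * f12 (Q (\<xi> h) (\<eta> h))) = h * (h * f21 (Q (\<eta>' h) (\<xi>' h)))"
      using A(3)[of h] B(3)[of h] by linarith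
    then show ?thesis using that by (metis mult_left_cancel)
  qed
  have Qlim: "((\<lambda>h. Q (x h) (y h)) \<longlongrightarrow> p) (at 0)"
    if "\<And>h. \<bar>x h - a0\<bar> \<le> \<bar>h\<bar>" "\<And>h. \<bar>y h - b0\<bar> \<le> \<bar>h\<bar>" for x y :: "real \<Rightarrow> real"
  proof (rule tendsto_pt)
    have hl: "((\<lambda>h::real. h) \<longlongrightarrow> 0) (at 0)" by (rule tendsto_ident_at)
    have xl: "(x \<longlongrightarrow> a0) (at 0)"
    proof -
      have "((\<lambda>h. x h - a0) \<longlongrightarrow> 0) (at 0)"
        by (rule tendsto_0_le[OF hl, where K=1]) (auto intro: always_eventually simp: that)
      then show ?thesis by (simp add: LIM_zero_iff)
    qed
    have yl: "(y \<longlongrightarrow> b0) (at 0)"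
    proof -
      have "((\<lambda>h. y h - b0) \<longlongrightarrow> 0) (at 0)"
        by (rule tendsto_0_le[OF hl, where K=1]) (auto intro: always_eventually simp: that)
      then show ?thesis by (simp add: LIM_zero_iff)
    qed
    fix d
    show "((\<lambda>h. getc d (Q (x h) (y h))) \<longlongrightarrow> getc d p) (at 0)"
    proof (cases "d = d1")
      case True then show ?thesis using xl by (simp add: Q_def a0_def)
    next
      case False
      show ?thesis
      proof (cases "d = d2")
        case True then show ?thesis using yl False by (simp add: Q_def b0_def getc_setc_other)
      next
        case False2: False
        then show ?thesis using False by (simp add: Q_def getc_setc_other)
      qed
    qed
  qed
  have l1: "((\<lambda>h. f12 (Q (\<xi> h) (\<eta> h))) \<longlongrightarrow> f12 p) (at 0)"
  proof -
    have "isCont f12 p" using c12 continuous_on_eq_continuous_at open_UNIV by blast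
    then show ?thesis by (rule isCont_tendsto_compose[OF _ Qlim[OF A(1) A(2)]])
  qed
  have l2: "((\<lambda>h. f21 (Q (\<eta>' h) (\<xi>' h))) \<longlongrightarrow> f21 p) (at 0)"
  proof -
    have "isCont f21 p" using c21 continuous_on_eq_continuous_at open_UNIV by blast
    then show ?thesis by (rule isCont_tendsto_compose[OF _ Qlim[OF B(2) B(1)]])
  qed
  have "((\<lambda>h. f12 (Q (\<xi> h) (\<eta> h))) \<longlongrightarrow> f21 p) (at 0)"
  proof (rule tendsto_cong[THEN iffD2, OF _ l2])
    show "\<forall>\<^sub>F h in at 0. f12 (Q (\<xi> h) (\<eta> h)) = f21 (Q (\<eta>' h) (\<xi>' h))"
      using eq by (auto simp: eventually_at_filter)
  qed
  then show ?thesis using l1 tendsto_unique by (metis trivial_limit_at)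
qed

lemma schwarz:
  assumes "smoothJ F"
  shows "pdir d1 (pdir d2 F) = pdir d2 (pdir d1 F)"
proof (cases "d1 = d2")
  case True then show ?thesis by simp
next
  case False
  have s1: "smoothJ (pdir d1 F)" and s2: "smoothJ (pdir d2 F)" using assms smoothJ_pdir by auto
  have "uc (pdir d1 (pdir d2 F)) p = uc (pdir d2 (pdir d1 F)) p" for p
  proof (rule clairaut[OF False[symmetric]])
    show "((\<lambda>w. uc F (setc d2 w p)) has_real_derivative uc (pdir d2 F) (setc d2 v p)) (at v)" for p v
      by (rule hasD_setc[OF smoothJ_hasD[OF assms]])
    show "((\<lambda>w. uc F (setc d1 w p)) has_real_derivative uc (pdir d1 F) (setc d1 v p)) (at v)" for p v
      by (rule hasD_setc[OF smoothJ_hasD[OF assms]])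
    show "((\<lambda>w. uc (pdir d2 F) (setc d1 w p)) has_real_derivative uc (pdir d1 (pdir d2 F)) (setc d1 v p)) (at v)" for p v
      by (rule hasD_setc[OF smoothJ_hasD[OF s2]])
    show "((\<lambda>w. uc (pdir d1 F) (setc d2 w p)) has_real_derivative uc (pdir d2 (pdir d1 F)) (setc d2 v p)) (at v)" for p v
      by (rule hasD_setc[OF smoothJ_hasD[OF s1]])
    show "continuous_on UNIV (uc (pdir d1 (pdir d2 F)))" by (rule smoothJ_cont[OF smoothJ_pdir[OF s2]])
    show "continuous_on UNIV (uc (pdir d2 (pdir d1 F)))" by (rule smoothJ_cont[OF smoothJ_pdir[OF s1]])
  qed
  then have H: "pdir d1 (pdir d2 F) J t = pdir d2 (pdir d1 F) J t" for J t
    by (metis uc_def fst_conv snd_conv)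
  then show ?thesis by (intro ext) (rule H)
qed



lemma totJ_alt: "totJ k F J t = pdir None F J t + (\<Sum>j\<le>k. \<Sum>i\<in>UNIV. pdir (Some (j,i)) F J t * J (Suc j) $ i)"
  by (simp add: totJ_def pdir_None pdir_Some inner_vec_def)

lemma totJ_fun: "totJ k F = (\<lambda>J t. pdir None F J t + (\<Sum>j\<le>k. \<Sum>i\<in>UNIV. pdir (Some (j,i)) F J t * J (Suc j) $ i))"
  by (intro ext) (rule totJ_alt)

lemma hasD_sum: "finite A \<Longrightarrow> (\<And>a. a \<in> A \<Longrightarrow> hasD d (F a) (G a)) \<Longrightarrow>
   hasD d (\<lambda>J t. \<Sum>a\<in>A. F a J t) (\<lambda>J t. \<Sum>a\<in>A. G a J t)"
  unfolding hasD_def uc_def by (auto intro!: DERIV_sum)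

lemma smoothJ_totJ: "smoothJ F \<Longrightarrow> smoothJ (totJ k F)"
  unfolding totJ_fun
  by (intro smoothJ_add smoothJ_sum smoothJ_mult smoothJ_pdir smoothJ_coord finite_UNIV finite_atMost) auto

lemma dep_totJ:
  fixes F :: "(nat \<Rightarrow> real^'n::finite) \<Rightarrow> real \<Rightarrow> real"
  assumes "depends_upto N F" "N \<le> k"
  shows "depends_upto (Suc k) (totJ k F)"
  unfolding depends_upto_def
proof (intro allI impI)
  fix J J' :: "nat \<Rightarrow> real^'n" and t assume h: "\<forall>j\<le>Suc k. J j = J' j"
  have dp: "depends_upto (Suc k) (pdir d F)" for d
    using dep_pdir[OF dep_mono[OF assms(1)]] assms(2) by simp
  then have "pdir d F J t = pdir d F J' t" for d using h unfolding depends_upto_def by blast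
  moreover have "J (Suc j) = J' (Suc j)" if "j \<le> k" for j using h that by simp
  ultimately show "totJ k F J t = totJ k F J' t" unfolding totJ_alt by simp
qed

lemma totJ_le:
  fixes F :: "(nat \<Rightarrow> real^'n::finite) \<Rightarrow> real \<Rightarrow> real"
  assumes "depends_upto p F" "p \<le> k"
  shows "totJ k F J t = totJ p F J t"
proof -
  have "(\<Sum>j\<le>k. \<Sum>i\<in>UNIV. pdir (Some (j,i)) F J t * J (Suc j) $ i) =
        (\<Sum>j\<le>p. \<Sum>i\<in>UNIV. pdir (Some (j,i)) F J t * J (Suc j) $ i)"
  proof (rule sum.mono_neutral_right)
    show "\<forall>j\<in>{..k} - {..p}. (\<Sum>i\<in>UNIV. pdir (Some (j,i)) F J t * J (Suc j) $ i) = 0"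
      using dep_zero[OF assms(1)] by auto
  qed (use assms(2) in auto)
  then show ?thesis unfolding totJ_alt by simp
qed

lemma totJ_zero: "totJ k (\<lambda>J t. 0) J t = 0"
  unfolding totJ_def dtJ_def gradJ_def by (simp add: inner_vec_def)

section \<open>Chain rule along a one-parameter family, jet form\<close>

lemma chainJ:
  fixes F :: "(nat \<Rightarrow> real^'n::finite) \<Rightarrow> real \<Rightarrow> real"
  assumes sm: "smoothJ F" and dep: "depends_upto N F"
    and dX: "\<And>j m. j \<le> N \<Longrightarrow> ((\<lambda>s. X s j $ m) has_real_derivative X' j m) (at s0)"
    and dT: "(T has_real_derivative T') (at s0)"
  shows "((\<lambda>s. F (X s) (T s)) has_real_derivative
     (\<Sum>j\<le>N. \<Sum>m\<in>UNIV. pdir (Some (j,m)) F (X s0) (T s0) * X' j m) + pdir None F (X s0) (T s0) * T') (at s0)"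
proof -
  define x where "x s = ((\<lambda>j. if j \<le> N then X s j else X s0 j), T s)" for s
  define D where "D = insert None (Some ` ({..N} \<times> (UNIV :: 'n set)))"
  define x' where "x' d = (case d of None \<Rightarrow> T' | Some (j,m) \<Rightarrow> X' j m)" for d
  have fD: "finite D" by (simp add: D_def)
  have Fx: "F (X s) (T s) = uc F (x s)" for s
    using dep unfolding depends_upto_def by (auto simp: uc_def x_def)
  have x0: "x s0 = (X s0, T s0)" by (simp add: x_def)
  have "((\<lambda>s. uc F (x s)) has_real_derivative (\<Sum>d\<in>D. uc (pdir d F) (x s0) * x' d)) (at s0)"
  proof -
    have a1: "\<forall>d\<in>D. continuous_on UNIV (uc (pdir d F))" using sm smoothJ_cont smoothJ_pdir by blast
    have a2: "\<forall>d\<in>D. \<forall>p v. ((\<lambda>w. uc F (setc d w p)) has_real_derivative uc (pdir d F) (setc d v p)) (at v)"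
      using hasD_setc[OF smoothJ_hasD[OF sm]] by blast
    have a3: "\<forall>d\<in>D. ((\<lambda>s. getc d (x s)) has_real_derivative x' d) (at s0)"
      using dX dT by (auto simp: D_def x_def x'_def)
    have a4: "\<forall>d s. d \<notin> D \<longrightarrow> getc d (x s) = getc d (x s0)"
    proof (intro allI impI)
      fix d s assume "d \<notin> D"
      then have "d \<noteq> None" by (simp add: D_def)
      then obtain j m where d: "d = Some (j,m)" by auto
      have "N < j"
      proof (rule ccontr)
        assume "\<not> N < j"
        then have "d \<in> D" using d by (auto simp: D_def)
        then show False using \<open>d \<notin> D\<close> by simp
      qed
      with d show "getc d (x s) = getc d (x s0)" by (simp add: x_def)
    qed
    show ?thesis
      by (rule chain_aux[OF fD, THEN spec, THEN mp, THEN mp, THEN mp, THEN mp, OF a1 a2 a3 a4])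
  qed
  moreover have "(\<Sum>d\<in>D. uc (pdir d F) (x s0) * x' d) =
     (\<Sum>j\<le>N. \<Sum>m\<in>UNIV. pdir (Some (j,m)) F (X s0) (T s0) * X' j m) + pdir None F (X s0) (T s0) * T'"
  proof -
    have "(\<Sum>d\<in>D. uc (pdir d F) (x s0) * x' d) =
       uc (pdir None F) (x s0) * T' + (\<Sum>d\<in>Some ` ({..N} \<times> (UNIV :: 'n set)). uc (pdir d F) (x s0) * x' d)"
      by (simp add: D_def x'_def)
    also have "(\<Sum>d\<in>Some ` ({..N} \<times> (UNIV :: 'n set)). uc (pdir d F) (x s0) * x' d) =
       (\<Sum>q\<in>{..N} \<times> (UNIV :: 'n set). uc (pdir (Some q) F) (x s0) * x' (Some q))"
      by (rule sum.reindex_cong[where l=Some]) auto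
    also have "\<dots> = (\<Sum>(j,m)\<in>{..N} \<times> (UNIV :: 'n set). pdir (Some (j,m)) F (X s0) (T s0) * X' j m)"
      by (intro sum.cong) (auto simp: x0 uc_def x'_def)
    also have "\<dots> = (\<Sum>j\<le>N. \<Sum>m\<in>UNIV. pdir (Some (j,m)) F (X s0) (T s0) * X' j m)"
      by (rule sum.cartesian_product[symmetric])
    finally show ?thesis by (simp add: x0 uc_def)
  qed
  ultimately show ?thesis unfolding Fx by simp
qed

section \<open>Partial derivative of a total derivative\<close>

lemma sum_indicator_aux:
  fixes a :: "nat \<Rightarrow> 'n::finite \<Rightarrow> real"
  shows "(\<Sum>j\<le>k. \<Sum>i\<in>UNIV. a j i * (if Some (p, l) = Some (Suc j, i) then 1 else 0)) =
   (if 0 < p \<and> p \<le> Suc k then a (p - 1) l else (0::real))"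
proof -
  have "(\<Sum>i\<in>UNIV. a j i * (if Some (p, l) = Some (Suc j, i) then 1 else 0)) = (if p = Suc j then a j l else 0)" for j
  proof (cases "p = Suc j")
    case True
    have "(\<Sum>i\<in>UNIV. a j i * (if Some (p, l) = Some (Suc j, i) then 1 else 0)) = (\<Sum>i\<in>UNIV. if l = i then a j i else 0)"
      using True by (intro sum.cong) auto
    also have "\<dots> = a j l" by (subst sum.delta') auto
    finally show ?thesis using True by simp
  next
    case False
    then show ?thesis by simp
  qed
  then have "(\<Sum>j\<le>k. \<Sum>i\<in>UNIV. a j i * (if Some (p, l) = Some (Suc j, i) then 1 else 0)) =
     (\<Sum>j\<le>k. if p = Suc j then a j l else 0)" by simp
  also have "\<dots> = (if 0 < p \<and> p \<le> Suc k then a (p - 1) l else 0)"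
  proof (cases "0 < p \<and> p \<le> Suc k")
    case True
    then have "(\<Sum>j\<le>k. if p = Suc j then a j l else 0) = (\<Sum>j\<le>k. if j = p - 1 then a j l else 0)"
      by (intro sum.cong) auto
    also have "\<dots> = a (p - 1) l" using True by (subst sum.delta) auto
    finally show ?thesis using True by simp
  next
    case False
    then have "(\<Sum>j\<le>k. if p = Suc j then a j l else 0) = (\<Sum>j\<le>k. (0::real))"
      by (intro sum.cong) auto
    then show ?thesis using False by auto
  qed
  finally show ?thesis .
qed

lemma pdir_totJ:
  assumes sm: "smoothJ F"
  shows "pdir (Some (p,l)) (totJ k F) = (\<lambda>J t. totJ k (pdir (Some (p,l)) F) J t +
           (if 0 < p \<and> p \<le> Suc k then pdir (Some (p - 1, l)) F J t else 0))"
proof -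
  let ?d = "Some (p,l)"
  have h: "hasD ?d (totJ k F) (\<lambda>J t. pdir ?d (pdir None F) J t +
      (\<Sum>j\<le>k. \<Sum>i\<in>UNIV. pdir ?d (pdir (Some (j,i)) F) J t * J (Suc j) $ i
          + pdir (Some (j,i)) F J t * (if ?d = Some (Suc j, i) then 1 else 0)))"
    unfolding totJ_fun
    by (intro hasD_add hasD_sum hasD_mult smoothJ_hasD smoothJ_pdir sm hasD_coord finite_UNIV finite_atMost) simp_all
  have "pdir ?d (totJ k F) J t = totJ k (pdir ?d F) J t +
           (if 0 < p \<and> p \<le> Suc k then pdir (Some (p - 1, l)) F J t else 0)" for J t
  proof -
    have "pdir ?d (totJ k F) J t = pdir ?d (pdir None F) J t +
      (\<Sum>j\<le>k. \<Sum>i\<in>UNIV. pdir ?d (pdir (Some (j,i)) F) J t * J (Suc j) $ i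
          + pdir (Some (j,i)) F J t * (if ?d = Some (Suc j, i) then 1 else 0))"
      using hasD_unique[OF h] by simp
    also have "\<dots> = pdir None (pdir ?d F) J t +
      (\<Sum>j\<le>k. \<Sum>i\<in>UNIV. pdir (Some (j,i)) (pdir ?d F) J t * J (Suc j) $ i)
      + (\<Sum>j\<le>k. \<Sum>i\<in>UNIV. pdir (Some (j,i)) F J t * (if ?d = Some (Suc j, i) then 1 else 0))"
      by (simp add: sum.distrib schwarz[OF sm])
    also have "\<dots> = totJ k (pdir ?d F) J t +
           (if 0 < p \<and> p \<le> Suc k then pdir (Some (p - 1, l)) F J t else 0)"
      unfolding totJ_alt sum_indicator_aux[where k=k and a="\<lambda>j i. pdir (Some (j,i)) F J t"] by simp
    finally show ?thesis .
  qed
  then show ?thesis by (intro ext)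
qed



definition psi :: "(real^'n::finite \<Rightarrow> real \<Rightarrow> real^'n) \<Rightarrow> nat \<Rightarrow> 'n \<Rightarrow> (nat \<Rightarrow> real^'n) \<Rightarrow> real \<Rightarrow> real" where
  "psi G k m = (\<lambda>J t. jetmap G k J t $ m)"

definition Mf :: "(real^'n::finite \<Rightarrow> real \<Rightarrow> real^'n) \<Rightarrow> 'n \<Rightarrow> 'n \<Rightarrow> (nat \<Rightarrow> real^'n) \<Rightarrow> real \<Rightarrow> real" where
  "Mf G m i = (\<lambda>J t. jac G (J 0) t $ m $ i)"

lemma psi_Suc: "psi G (Suc k) m = totJ k (psi G k m)"
  by (intro ext) (simp add: psi_def totJv_def)

lemma psi_0: "psi G 0 m = (\<lambda>J t. (\<lambda>p. G (fst p) (snd p) $ m) (J 0, t))"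
  by (simp add: psi_def)

locale smoothmap =
  fixes G :: "real^'n::finite \<Rightarrow> real \<Rightarrow> real^'n"
  assumes Gs: "\<And>m. smoothE (\<lambda>p::(real^'n) \<times> real. G (fst p) (snd p) $ m)"
begin

lemma psi_props: "smoothJ (psi G k m) \<and> depends_upto k (psi G k m)"
proof (induction k arbitrary: m)
  case 0
  have "smoothJ (psi G 0 m)" unfolding psi_0 by (rule smoothE_J[OF Gs])
  moreover have "depends_upto 0 (psi G 0 m)" by (simp add: depends_upto_def psi_def)
  ultimately show ?case by blast
next
  case (Suc k)
  then show ?case unfolding psi_Suc using smoothJ_totJ dep_totJ by blast
qed

lemma psi_smooth: "smoothJ (psi G k m)" using psi_props by blast
lemma psi_dep: "depends_upto k (psi G k m)" using psi_props by blast

lemma pdir_psi0: "pdir (Some (0,i)) (psi G 0 m) = Mf G m i"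
  by (intro ext) (simp add: pdir_def uc_def psi_def Mf_def jac_def)

lemma Mf_smooth: "smoothJ (Mf G m i)"
  using smoothJ_pdir[OF psi_smooth[of 0 m]] pdir_psi0 by metis

lemma Mf_dep: "depends_upto 0 (Mf G m i)"
  using dep_pdir[OF psi_dep[of 0 m]] pdir_psi0 by metis

lemma J2: "pdir (Some (k,i)) (psi G k m) = Mf G m i"
proof (induction k)
  case 0 then show ?case by (rule pdir_psi0)
next
  case (Suc k)
  have z: "pdir (Some (Suc k, i)) (psi G k m) = (\<lambda>J t. 0)"
    by (rule dep_zero[OF psi_dep]) simp
  show ?case
    unfolding psi_Suc pdir_totJ[OF psi_smooth] z using Suc by (simp add: totJ_zero)
qed

lemma J3: "pdir (Some (k,i)) (psi G (Suc k) m) = (\<lambda>J t. real (Suc k) * totJ 0 (Mf G m i) J t)"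
proof (induction k)
  case 0
  show ?case unfolding psi_Suc pdir_totJ[OF psi_smooth] pdir_psi0 by simp
next
  case (Suc k)
  have e: "totJ (Suc k) (Mf G m i) J t = totJ 0 (Mf G m i) J t" for J t
    by (rule totJ_le[OF Mf_dep]) simp
  show ?case
    unfolding psi_Suc[of G "Suc k"] pdir_totJ[OF psi_smooth] J2 Suc
    by (intro ext) (simp add: e algebra_simps Suc.IH)
qed

abbreviation Gj :: "(nat \<Rightarrow> real^'n) \<Rightarrow> real \<Rightarrow> nat \<Rightarrow> real^'n" where
  "Gj J t \<equiv> (\<lambda>k. jetmap G k J t)"

lemma comp_hasD:
  fixes F :: "(nat \<Rightarrow> real^'n) \<Rightarrow> real \<Rightarrow> real"
  assumes sm: "smoothJ F" and dep: "depends_upto N F"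
  shows "hasD d (\<lambda>J t. F (Gj J t) t)
     (\<lambda>J t. (\<Sum>p\<le>N. \<Sum>m\<in>UNIV. pdir (Some (p,m)) F (Gj J t) t * pdir d (psi G p m) J t)
            + pdir None F (Gj J t) t * (if d = None then 1 else 0))"
  unfolding hasD_def
proof (intro allI)
  fix J t
  define X where "X s = Gj (fst (shiftp d s J t)) (snd (shiftp d s J t))" for s
  define T where "T s = snd (shiftp d s J t)" for s
  have dX: "((\<lambda>s. X s j $ m) has_real_derivative pdir d (psi G j m) J t) (at 0)" for j m
  proof -
    have "((\<lambda>s. uc (psi G j m) (shiftp d s J t)) has_real_derivative pdir d (psi G j m) J t) (at 0)"
      using smoothJ_hasD[OF psi_smooth] by (simp add: hasD_def)
    then show ?thesis by (simp add: X_def uc_def psi_def)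
  qed
  have dT: "(T has_real_derivative (if d = None then 1 else 0)) (at 0)"
  proof (cases d)
    case None
    then show ?thesis unfolding T_def by (auto intro!: derivative_eq_intros)
  next
    case (Some a) then obtain j i where "d = Some (j,i)" by (cases a) auto
    then show ?thesis unfolding T_def by simp
  qed
  have X0: "X 0 = Gj J t" and T0: "T 0 = t" by (simp_all add: X_def T_def)
  have "((\<lambda>s. F (X s) (T s)) has_real_derivative
     (\<Sum>j\<le>N. \<Sum>m\<in>UNIV. pdir (Some (j,m)) F (X 0) (T 0) * pdir d (psi G j m) J t) + pdir None F (X 0) (T 0) * (if d = None then 1 else 0)) (at 0)"
    by (rule chainJ[OF sm dep dX dT])
  moreover have "(\<lambda>s. F (X s) (T s)) = (\<lambda>s. uc (\<lambda>J t. F (Gj J t) t) (shiftp d s J t))"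
    by (simp add: X_def T_def uc_def)
  ultimately show "((\<lambda>s. uc (\<lambda>J t. F (Gj J t) t) (shiftp d s J t)) has_real_derivative
     (\<Sum>p\<le>N. \<Sum>m\<in>UNIV. pdir (Some (p,m)) F (Gj J t) t * pdir d (psi G p m) J t)
            + pdir None F (Gj J t) t * (if d = None then 1 else 0)) (at 0)"
    unfolding X0 T0 by simp
qed

lemma sum_swap4:
  "(\<Sum>j\<in>A. \<Sum>i\<in>B. \<Sum>p\<in>C. \<Sum>m\<in>D. f j i p m) = (\<Sum>p\<in>C. \<Sum>m\<in>D. \<Sum>j\<in>A. \<Sum>i\<in>B. (f j i p m :: real))"
proof -
  have "(\<Sum>j\<in>A. \<Sum>i\<in>B. \<Sum>p\<in>C. \<Sum>m\<in>D. f j i p m) = (\<Sum>j\<in>A. \<Sum>p\<in>C. \<Sum>i\<in>B. \<Sum>m\<in>D. f j i p m)"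
    by (rule sum.cong[OF refl], rule sum.swap)
  also have "\<dots> = (\<Sum>j\<in>A. \<Sum>p\<in>C. \<Sum>m\<in>D. \<Sum>i\<in>B. f j i p m)"
    by (rule sum.cong[OF refl], rule sum.cong[OF refl], rule sum.swap)
  also have "\<dots> = (\<Sum>p\<in>C. \<Sum>j\<in>A. \<Sum>m\<in>D. \<Sum>i\<in>B. f j i p m)"
    by (rule sum.swap)
  also have "\<dots> = (\<Sum>p\<in>C. \<Sum>m\<in>D. \<Sum>j\<in>A. \<Sum>i\<in>B. f j i p m)"
    by (rule sum.cong[OF refl], rule sum.swap)
  finally show ?thesis .
qed

lemma totJ_comp:
  fixes F :: "(nat \<Rightarrow> real^'n) \<Rightarrow> real \<Rightarrow> real"
  assumes sm: "smoothJ F" and dep: "depends_upto k F"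
  shows "totJ k (\<lambda>J t. F (Gj J t) t) J t = totJ k F (Gj J t) t"
proof -
  let ?Fp = "\<lambda>p m. pdir (Some (p,m)) F (Gj J t) t"
  let ?Ft = "pdir None F (Gj J t) t"
  have pd: "pdir d (\<lambda>J t. F (Gj J t) t) J t =
      (\<Sum>p\<le>k. \<Sum>m\<in>UNIV. ?Fp p m * pdir d (psi G p m) J t) + ?Ft * (if d = None then 1 else 0)" for d
    using hasD_unique[OF comp_hasD[OF sm dep, of d]] by simp
  have tp: "totJ k (psi G p m) J t = Gj J t (Suc p) $ m" if "p \<le> k" for p m
  proof -
    have "totJ k (psi G p m) J t = totJ p (psi G p m) J t" by (rule totJ_le[OF psi_dep that])
    also have "\<dots> = psi G (Suc p) m J t" by (simp add: psi_Suc)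
    finally show ?thesis by (simp add: psi_def)
  qed
  have S1: "(\<Sum>j\<le>k. \<Sum>i\<in>UNIV. (\<Sum>p\<le>k. \<Sum>m\<in>UNIV. ?Fp p m * pdir (Some (j,i)) (psi G p m) J t) * J (Suc j) $ i)
     = (\<Sum>j\<le>k. \<Sum>i\<in>UNIV. \<Sum>p\<le>k. \<Sum>m\<in>UNIV. ?Fp p m * (pdir (Some (j,i)) (psi G p m) J t * J (Suc j) $ i))"
    by (simp add: sum_distrib_right mult.assoc)
  also have "\<dots> = (\<Sum>p\<le>k. \<Sum>m\<in>UNIV. \<Sum>j\<le>k. \<Sum>i\<in>UNIV. ?Fp p m * (pdir (Some (j,i)) (psi G p m) J t * J (Suc j) $ i))"
    by (rule sum_swap4)
  also have "\<dots> = (\<Sum>p\<le>k. \<Sum>m\<in>UNIV. ?Fp p m * (\<Sum>j\<le>k. \<Sum>i\<in>UNIV. pdir (Some (j,i)) (psi G p m) J t * J (Suc j) $ i))"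
    by (simp add: sum_distrib_left)
  finally have S1' : "(\<Sum>j\<le>k. \<Sum>i\<in>UNIV. (\<Sum>p\<le>k. \<Sum>m\<in>UNIV. ?Fp p m * pdir (Some (j,i)) (psi G p m) J t) * J (Suc j) $ i)
     = (\<Sum>p\<le>k. \<Sum>m\<in>UNIV. ?Fp p m * (\<Sum>j\<le>k. \<Sum>i\<in>UNIV. pdir (Some (j,i)) (psi G p m) J t * J (Suc j) $ i))" .
  have pdN: "pdir None (\<lambda>J t. F (Gj J t) t) J t = (\<Sum>p\<le>k. \<Sum>m\<in>UNIV. ?Fp p m * pdir None (psi G p m) J t) + ?Ft"
    using pd[of None] by simp
  have pdS: "pdir (Some (j,i)) (\<lambda>J t. F (Gj J t) t) J t = (\<Sum>p\<le>k. \<Sum>m\<in>UNIV. ?Fp p m * pdir (Some (j,i)) (psi G p m) J t)" for j i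
    using pd[of "Some (j,i)"] by simp
  have "totJ k (\<lambda>J t. F (Gj J t) t) J t =
     (\<Sum>p\<le>k. \<Sum>m\<in>UNIV. ?Fp p m * pdir None (psi G p m) J t) + ?Ft +
     (\<Sum>p\<le>k. \<Sum>m\<in>UNIV. ?Fp p m * (\<Sum>j\<le>k. \<Sum>i\<in>UNIV. pdir (Some (j,i)) (psi G p m) J t * J (Suc j) $ i))"
    unfolding totJ_alt[of k "\<lambda>J t. F (Gj J t) t"] pdN pdS S1' ..
  also have "\<dots> = ?Ft + (\<Sum>p\<le>k. \<Sum>m\<in>UNIV. ?Fp p m * totJ k (psi G p m) J t)"
    unfolding totJ_alt[of k "psi G _ _"] by (simp add: sum.distrib distrib_left)
  also have "\<dots> = ?Ft + (\<Sum>p\<le>k. \<Sum>m\<in>UNIV. ?Fp p m * Gj J t (Suc p) $ m)"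
    using tp by simp
  also have "\<dots> = totJ k F (Gj J t) t"
    unfolding totJ_alt by simp
  finally show ?thesis .
qed

end



lemma totJ_coord: "totJ k (\<lambda>J t. J p $ m) J t = (if p \<le> k then J (Suc p) $ m else 0)"
proof -
  have pd: "pdir d (\<lambda>J t. J p $ m) = (\<lambda>J t. if d = Some (p, m) then 1 else 0)" for d
    by (rule hasD_unique[OF hasD_coord])
  have i: "(\<Sum>i\<in>UNIV. (if Some (j, i) = Some (p, m) then 1 else 0) * J (Suc j) $ i) =
      (if j = p then J (Suc j) $ m else 0)" for j
  proof (cases "j = p")
    case True
    have "(\<Sum>i\<in>UNIV. (if Some (j, i) = Some (p, m) then 1 else 0) * J (Suc j) $ i) =
       (\<Sum>i\<in>UNIV. if m = i then J (Suc j) $ i else 0)" using True by (intro sum.cong) auto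
    also have "\<dots> = J (Suc j) $ m" by (subst sum.delta') auto
    finally show ?thesis using True by simp
  qed simp
  show ?thesis unfolding totJ_alt pd i by (simp add: sum.delta)
qed

lemma totJ_sumprod:
  fixes Af Bf :: "'a \<Rightarrow> (nat \<Rightarrow> real^'n::finite) \<Rightarrow> real \<Rightarrow> real"
  assumes fA: "finite A"
    and hA: "\<And>a d. hasD d (Af a) (pdir d (Af a))"
    and hB: "\<And>a d. hasD d (Bf a) (pdir d (Bf a))"
  shows "totJ k (\<lambda>J t. \<Sum>a\<in>A. Af a J t * Bf a J t) J t =
     (\<Sum>a\<in>A. totJ k (Af a) J t * Bf a J t + Af a J t * totJ k (Bf a) J t)"
proof -
  have pd: "pdir d (\<lambda>J t. \<Sum>a\<in>A. Af a J t * Bf a J t) J t =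
     (\<Sum>a\<in>A. pdir d (Af a) J t * Bf a J t + Af a J t * pdir d (Bf a) J t)" for d
    using hasD_unique[OF hasD_sum[OF fA hasD_mult[OF hA hB]]] by simp
  define X where "X a d = pdir d (Af a) J t * Bf a J t + Af a J t * pdir d (Bf a) J t" for a d
  have "(\<Sum>j\<le>k. \<Sum>i\<in>UNIV. (\<Sum>a\<in>A. X a (Some (j,i))) * J (Suc j) $ i) =
        (\<Sum>j\<le>k. \<Sum>i\<in>UNIV. \<Sum>a\<in>A. X a (Some (j,i)) * J (Suc j) $ i)"
    by (simp add: sum_distrib_right)
  also have "\<dots> = (\<Sum>j\<le>k. \<Sum>a\<in>A. \<Sum>i\<in>UNIV. X a (Some (j,i)) * J (Suc j) $ i)"
    by (rule sum.cong[OF refl], rule sum.swap)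
  also have "\<dots> = (\<Sum>a\<in>A. \<Sum>j\<le>k. \<Sum>i\<in>UNIV. X a (Some (j,i)) * J (Suc j) $ i)"
    by (rule sum.swap)
  finally have sw: "(\<Sum>j\<le>k. \<Sum>i\<in>UNIV. (\<Sum>a\<in>A. X a (Some (j,i))) * J (Suc j) $ i) =
      (\<Sum>a\<in>A. \<Sum>j\<le>k. \<Sum>i\<in>UNIV. X a (Some (j,i)) * J (Suc j) $ i)" .
  have "totJ k (\<lambda>J t. \<Sum>a\<in>A. Af a J t * Bf a J t) J t =
    (\<Sum>a\<in>A. X a None) + (\<Sum>a\<in>A. \<Sum>j\<le>k. \<Sum>i\<in>UNIV. X a (Some (j,i)) * J (Suc j) $ i)"
    unfolding totJ_alt pd X_def[symmetric] sw ..
  also have "\<dots> = (\<Sum>a\<in>A. X a None + (\<Sum>j\<le>k. \<Sum>i\<in>UNIV. X a (Some (j,i)) * J (Suc j) $ i))"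
    by (simp add: sum.distrib)
  also have "\<dots> = (\<Sum>a\<in>A. totJ k (Af a) J t * Bf a J t + Af a J t * totJ k (Bf a) J t)"
    unfolding totJ_alt X_def
    by (intro sum.cong refl) (simp add: sum.distrib sum_distrib_left sum_distrib_right algebra_simps)
  finally show ?thesis .
qed

lemma comp_id:
  assumes P: "smoothmap \<Phi>" and Q: "smoothmap \<Psi>"
    and inv1: "\<And>q t. \<Psi> (\<Phi> q t) t = q"
  shows "jetmap \<Psi> k (\<lambda>k. jetmap \<Phi> k J t) t = J k"
proof (induction k arbitrary: J t)
  case 0
  then show ?case by (simp add: inv1)
next
  case (Suc k)
  interpret P: smoothmap \<Phi> by (rule P)
  interpret Q: smoothmap \<Psi> by (rule Q)
  have IH: "(\<lambda>J t. psi \<Psi> k m (\<lambda>k. jetmap \<Phi> k J t) t) = (\<lambda>J t. J k $ m)" for m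
    using Suc by (simp add: psi_def)
  have "jetmap \<Psi> (Suc k) (\<lambda>k. jetmap \<Phi> k J t) t $ m = J (Suc k) $ m" for m
  proof -
    have "jetmap \<Psi> (Suc k) (\<lambda>k. jetmap \<Phi> k J t) t $ m = psi \<Psi> (Suc k) m (\<lambda>k. jetmap \<Phi> k J t) t"
      by (simp add: psi_def)
    also have "\<dots> = totJ k (psi \<Psi> k m) (\<lambda>k. jetmap \<Phi> k J t) t" by (simp add: psi_Suc)
    also have "\<dots> = totJ k (\<lambda>J t. psi \<Psi> k m (\<lambda>k. jetmap \<Phi> k J t) t) J t"
      by (rule P.totJ_comp[OF Q.psi_smooth Q.psi_dep, symmetric])
    also have "\<dots> = J (Suc k) $ m" unfolding IH totJ_coord by simp
    finally show ?thesis .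
  qed
  then show ?case by (simp add: vec_eq_iff)
qed

lemma jac_inv:
  assumes P: "smoothmap \<Phi>" and Q: "smoothmap \<Psi>"
    and inv1: "\<And>q t. \<Psi> (\<Phi> q t) t = q"
  shows "jac \<Psi> (\<Phi> q t) t ** jac \<Phi> q t = mat 1"
proof -
  interpret P: smoothmap \<Phi> by (rule P)
  interpret Q: smoothmap \<Psi> by (rule Q)
  have "(jac \<Psi> (\<Phi> q t) t ** jac \<Phi> q t) $ m $ j = mat 1 $ m $ j" for m j
  proof -
    define X where "X s = (\<lambda>_::nat. \<Phi> (q + s *\<^sub>R axis j 1) t)" for s
    have dX: "((\<lambda>s. X s l $ n) has_real_derivative jac \<Phi> q t $ n $ j) (at 0)" if "l \<le> 0" for l n
    proof -
      have "((\<lambda>s. uc (psi \<Phi> 0 n) (shiftp (Some (0,j)) s (\<lambda>_. q) t)) has_real_derivative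
          pdir (Some (0,j)) (psi \<Phi> 0 n) (\<lambda>_. q) t) (at 0)"
      proof -
        have h: "hasD (Some (0,j)) (psi \<Phi> 0 n) (pdir (Some (0,j)) (psi \<Phi> 0 n))"
          by (rule smoothJ_hasD[OF P.psi_smooth])
        then show ?thesis unfolding hasD_def by blast
      qed
      then show ?thesis unfolding P.pdir_psi0 by (simp add: X_def uc_def psi_def Mf_def)
    qed
    have d0: "((\<lambda>s. psi \<Psi> 0 m (X s) ((\<lambda>s. t) s)) has_real_derivative
      (\<Sum>l\<le>0. \<Sum>n\<in>UNIV. pdir (Some (l,n)) (psi \<Psi> 0 m) (X 0) t * jac \<Phi> q t $ n $ j) + pdir None (psi \<Psi> 0 m) (X 0) t * 0) (at 0)"
      by (rule chainJ[OF Q.psi_smooth Q.psi_dep dX DERIV_const])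
    have e: "pdir (Some (0,n)) (psi \<Psi> 0 m) (X 0) t = jac \<Psi> (\<Phi> q t) t $ m $ n" for n
      unfolding Q.pdir_psi0 by (simp add: Mf_def X_def)
    have eqL: "(\<lambda>s. psi \<Psi> 0 m (X s) ((\<lambda>s. t) s)) = (\<lambda>s. (q + s *\<^sub>R axis j 1) $ m)"
      by (simp add: psi_def X_def inv1)
    have d1: "((\<lambda>s. (q + s *\<^sub>R axis j 1) $ m) has_real_derivative
       (\<Sum>n\<in>UNIV. jac \<Psi> (\<Phi> q t) t $ m $ n * jac \<Phi> q t $ n $ j)) (at 0)"
      using d0 unfolding eqL by (simp add: e)
    have d2: "((\<lambda>s. (q + s *\<^sub>R axis j 1) $ m) has_real_derivative (if m = j then 1 else 0)) (at 0)"
      by (auto simp: axis_def intro!: derivative_eq_intros)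
    have "(\<Sum>n\<in>UNIV. jac \<Psi> (\<Phi> q t) t $ m $ n * jac \<Phi> q t $ n $ j) = (if m = j then 1 else 0)"
      using DERIV_unique[OF d1 d2] .
    then show ?thesis by (simp add: matrix_matrix_mult_def mat_def)
  qed
  then show ?thesis by (simp add: vec_eq_iff)
qed



theorem proposition1p1:
  fixes r :: nat
    and Y :: "(nat \<Rightarrow> real^'n) \<Rightarrow> real \<Rightarrow> real"
    and \<Phi> \<Psi> :: "real^'n \<Rightarrow> real \<Rightarrow> real^'n"
  assumes Y_smooth: "smoothJ Y"
    and Y_dep: "depends_upto (Suc r) Y"
    and \<Phi>_smooth: "\<And>i. smoothE (\<lambda>p::(real^'n) \<times> real. \<Phi> (fst p) (snd p) $ i)"
    and \<Psi>_smooth: "\<And>i. smoothE (\<lambda>p::(real^'n) \<times> real. \<Psi> (fst p) (snd p) $ i)"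
    and inv1: "\<And>q t. \<Psi> (\<Phi> q t) t = q"
    and inv2: "\<And>qb t. \<Phi> (\<Psi> qb t) t = qb"
    and jac_nz: "\<And>q t. det (jac \<Phi> q t) \<noteq> 0"
  shows "\<forall>J t. Op r Y J t =
           transpose (jac \<Phi> (J 0) t) *v Op r (transport \<Psi> Y) (\<lambda>k. jetmap \<Phi> k J t) t"
proof (intro allI)
  fix J :: "nat \<Rightarrow> real^'n" and t :: real
  have P: "smoothmap \<Phi>" using \<Phi>_smooth by (rule smoothmap.intro)
  have Q: "smoothmap \<Psi>" using \<Psi>_smooth by (rule smoothmap.intro)
  interpret P: smoothmap \<Phi> by (rule P)
  interpret Q: smoothmap \<Psi> by (rule Q)
  define Jb where "Jb = (\<lambda>k. jetmap \<Phi> k J t)"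
  define Yt where "Yt = transport \<Psi> Y"
  have Yt': "Yt = (\<lambda>Jb t. Y (\<lambda>k. jetmap \<Psi> k Jb t) t)" by (simp add: Yt_def transport_def)
  have cid: "(\<lambda>k. jetmap \<Psi> k Jb t) = J" unfolding Jb_def by (intro ext) (rule comp_id[OF P Q inv1])
  define g where "g m = pdir (Some (Suc r, m)) Y" for m
  define y where "y m = pdir (Some (r, m)) Y" for m
  have gs: "smoothJ (g m)" for m unfolding g_def by (rule smoothJ_pdir[OF Y_smooth])
  have gd: "depends_upto (Suc r) (g m)" for m unfolding g_def by (rule dep_pdir[OF Y_dep])
  have pdY: "pdir d Yt Jb' t' =
     (\<Sum>p\<le>Suc r. \<Sum>m\<in>UNIV. pdir (Some (p,m)) Y (\<lambda>k. jetmap \<Psi> k Jb' t') t' * pdir d (psi \<Psi> p m) Jb' t')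
      + pdir None Y (\<lambda>k. jetmap \<Psi> k Jb' t') t' * (if d = None then 1 else 0)" for d Jb' t'
    unfolding Yt' by (simp add: hasD_unique[OF Q.comp_hasD[OF Y_smooth Y_dep, of d]])
  have F2: "pdir (Some (Suc r, i)) Yt Jb' t' =
      (\<Sum>m\<in>UNIV. g m (\<lambda>k. jetmap \<Psi> k Jb' t') t' * Mf \<Psi> m i Jb' t')" for i Jb' t'
  proof -
    have z: "pdir (Some (Suc r, i)) (psi \<Psi> p m) = (\<lambda>J t. 0)" if "p \<le> r" for p m
      by (rule dep_zero[OF Q.psi_dep]) (use that in simp)
    have "pdir (Some (Suc r, i)) Yt Jb' t' =
      (\<Sum>p\<le>r. \<Sum>m\<in>UNIV. pdir (Some (p,m)) Y (\<lambda>k. jetmap \<Psi> k Jb' t') t' * pdir (Some (Suc r, i)) (psi \<Psi> p m) Jb' t')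
      + (\<Sum>m\<in>UNIV. pdir (Some (Suc r,m)) Y (\<lambda>k. jetmap \<Psi> k Jb' t') t' * pdir (Some (Suc r, i)) (psi \<Psi> (Suc r) m) Jb' t')"
      unfolding pdY by simp
    also have "(\<Sum>p\<le>r. \<Sum>m\<in>UNIV. pdir (Some (p,m)) Y (\<lambda>k. jetmap \<Psi> k Jb' t') t' * pdir (Some (Suc r, i)) (psi \<Psi> p m) Jb' t') = 0"
      using z by simp
    finally show ?thesis by (simp add: Q.J2 g_def)
  qed
  have F3: "pdir (Some (r, i)) Yt Jb t =
      (\<Sum>m\<in>UNIV. y m J t * Mf \<Psi> m i Jb t) + real (Suc r) * (\<Sum>m\<in>UNIV. g m J t * totJ 0 (Mf \<Psi> m i) Jb t)" for i
  proof -
    have z: "pdir (Some (r, i)) (psi \<Psi> p m) = (\<lambda>J t. 0)" if "p < r" for p m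
      by (rule dep_zero[OF Q.psi_dep]) (use that in simp)
    have split: "(\<Sum>p\<le>Suc r. f p) = (\<Sum>p<r. f p) + f r + f (Suc r)" for f :: "nat \<Rightarrow> real"
      by (simp add: lessThan_Suc_atMost[symmetric])
    have "pdir (Some (r, i)) Yt Jb t =
      (\<Sum>p<r. \<Sum>m\<in>UNIV. pdir (Some (p,m)) Y J t * pdir (Some (r, i)) (psi \<Psi> p m) Jb t)
      + (\<Sum>m\<in>UNIV. pdir (Some (r,m)) Y J t * pdir (Some (r, i)) (psi \<Psi> r m) Jb t)
      + (\<Sum>m\<in>UNIV. pdir (Some (Suc r,m)) Y J t * pdir (Some (r, i)) (psi \<Psi> (Suc r) m) Jb t)"
      unfolding pdY cid split by simp
    also have "(\<Sum>p<r. \<Sum>m\<in>UNIV. pdir (Some (p,m)) Y J t * pdir (Some (r, i)) (psi \<Psi> p m) Jb t) = 0"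
      using z by simp
    finally show ?thesis
      by (simp add: Q.J2 Q.J3 g_def y_def sum_distrib_left mult.assoc mult.left_commute)
  qed
  have F4: "totJ (Suc r) (\<lambda>J' t'. gradJ (Suc r) Yt J' t' $ i) Jb t =
     (\<Sum>m\<in>UNIV. totJ (Suc r) (g m) J t * Mf \<Psi> m i Jb t + g m J t * totJ 0 (Mf \<Psi> m i) Jb t)" for i
  proof -
    define Af where "Af m = (\<lambda>J' t'. g m (\<lambda>k. jetmap \<Psi> k J' t') t')" for m
    have fe: "(\<lambda>J' t'. gradJ (Suc r) Yt J' t' $ i) = (\<lambda>J' t'. \<Sum>m\<in>UNIV. Af m J' t' * Mf \<Psi> m i J' t')"
      by (intro ext) (simp add: pdir_Some[symmetric] F2 Af_def)
    have hA: "hasD d (Af m) (pdir d (Af m))" for m d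
      unfolding Af_def by (rule hasD_pdir[OF Q.comp_hasD[OF gs gd]])
    have hB: "hasD d (Mf \<Psi> m i) (pdir d (Mf \<Psi> m i))" for m d
      by (rule smoothJ_hasD[OF Q.Mf_smooth])
    have tA: "totJ (Suc r) (Af m) Jb t = totJ (Suc r) (g m) J t" for m
      unfolding Af_def Q.totJ_comp[OF gs gd] cid ..
    have vA: "Af m Jb t = g m J t" for m unfolding Af_def cid ..
    have tM: "totJ (Suc r) (Mf \<Psi> m i) Jb t = totJ 0 (Mf \<Psi> m i) Jb t" for m
      by (rule totJ_le[OF Q.Mf_dep]) simp
    have fU: "finite (UNIV :: 'n set)" by simp
    show ?thesis
      unfolding fe totJ_sumprod[OF fU hA hB] tA vA tM ..
  qed
  have Opt: "Op r Yt Jb t = transpose (jac \<Psi> (Jb 0) t) *v Op r Y J t"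
  proof -
    have ge: "(\<lambda>J' t'. gradJ (Suc r) Y J' t' $ m) = g m" for m
      by (intro ext) (simp add: pdir_Some g_def)
    have "Op r Yt Jb t $ i = (transpose (jac \<Psi> (Jb 0) t) *v Op r Y J t) $ i" for i
    proof -
      have "Op r Yt Jb t $ i = pdir (Some (r, i)) Yt Jb t - real (Suc r) * totJ (Suc r) (\<lambda>J' t'. gradJ (Suc r) Yt J' t' $ i) Jb t"
        by (simp add: Op_def totJv_def pdir_Some)
      also have "\<dots> = (\<Sum>m\<in>UNIV. Mf \<Psi> m i Jb t * (y m J t - real (Suc r) * totJ (Suc r) (g m) J t))"
        unfolding F3 F4
        by (simp add: sum.distrib sum_subtractf sum_distrib_left algebra_simps)
      also have "\<dots> = (transpose (jac \<Psi> (Jb 0) t) *v Op r Y J t) $ i"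
        by (simp add: matrix_vector_mult_def transpose_def Op_def totJv_def ge Mf_def y_def pdir_Some)
      finally show ?thesis .
    qed
    then show ?thesis by (simp add: vec_eq_iff)
  qed
  have Jb0: "Jb 0 = \<Phi> (J 0) t" by (simp add: Jb_def)
  have "transpose (jac \<Phi> (J 0) t) *v Op r Yt Jb t =
     (transpose (jac \<Psi> (\<Phi> (J 0) t) t ** jac \<Phi> (J 0) t)) *v Op r Y J t"
    unfolding Opt Jb0 matrix_vector_mul_assoc matrix_transpose_mul ..
  also have "\<dots> = Op r Y J t"
    unfolding jac_inv[OF P Q inv1] transpose_mat matrix_vector_mul_lid ..
  finally show "Op r Y J t = transpose (jac \<Phi> (J 0) t) *v Op r (transport \<Psi> Y) (\<lambda>k. jetmap \<Phi> k J t) t"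
    unfolding Yt_def Jb_def by simp
qed


end
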